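(* Let $\boldsymbol{\Lambda}=\mathrm{diag}(\lambda_1,\dots,\lambda_N)$ with $\lambda_i\ge0$ and $\boldsymbol{\lambda}=(\lambda_1,\dots,\lambda_N)$ with $\|\boldsymbol{\lambda}\|_2>0$, and let $S\in\mathbb{R}^{N\times n}$, $n\le N$, have i.i.d. $\mathcal{N}(0,1)$ entries. Then for $t<1$, $$(1-t)\sqrt{\textstyle\sum_{i=1}^N\lambda_i^2}\le s_{\min}(\boldsymbol{\Lambda}S)\le s_{\max}(\boldsymbol{\Lambda}S)\le(1+t)\sqrt{\textstyle\sum_{i=1}^N\lambda_i^2}$$ with probability at least $1-9^n\cdot2\exp\!\left(-\min\left\{\frac1{16}\frac{\|\boldsymbol{\lambda}\|_2^4}{\|\boldsymbol{\lambda}\|_4^4}t^2,\ \frac14\frac{\|\boldsymbol{\lambda}\|_2^2}{\|\boldsymbol{\lambda}\|_\infty^2}t\right\}\right)$.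
   Context: $s_{\min}$ and $s_{\max}$ denote the smallest and largest singular values of an $N\times n$ matrix ($n\le N$); $\|\cdot\|_q$ are the vector $\ell_q$ norms. *)

theory Defs
  imports "HOL-Probability.Probability"
begin

text \<open>An N x n real matrix is represented as A :: nat => nat => real, entry (i,j)
  for i < N, j < n.  Vectors of length k are nat => real restricted to indices < k.\<close>

definition mat_vec_norm :: "nat \<Rightarrow> nat \<Rightarrow> (nat \<Rightarrow> nat \<Rightarrow> real) \<Rightarrow> (nat \<Rightarrow> real) \<Rightarrow> real" where
  "mat_vec_norm N n A x = sqrt (\<Sum>i<N. (\<Sum>j<n. A i j * x j)\<^sup>2)"

definition unit_vecs :: "nat \<Rightarrow> (nat \<Rightarrow> real) set" where
  "unit_vecs n = {x. (\<Sum>j<n. (x j)\<^sup>2) = 1 \<and> (\<forall>j\<ge>n. x j = 0)}"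

definition s_min :: "nat \<Rightarrow> nat \<Rightarrow> (nat \<Rightarrow> nat \<Rightarrow> real) \<Rightarrow> real" where
  "s_min N n A = (INF x\<in>unit_vecs n. mat_vec_norm N n A x)"

definition s_max :: "nat \<Rightarrow> nat \<Rightarrow> (nat \<Rightarrow> nat \<Rightarrow> real) \<Rightarrow> real" where
  "s_max N n A = (SUP x\<in>unit_vecs n. mat_vec_norm N n A x)"

definition l2_norm :: "nat \<Rightarrow> (nat \<Rightarrow> real) \<Rightarrow> real" where
  "l2_norm N v = sqrt (\<Sum>i<N. (v i)\<^sup>2)"

definition l4_norm :: "nat \<Rightarrow> (nat \<Rightarrow> real) \<Rightarrow> real" where
  "l4_norm N v = root 4 (\<Sum>i<N. (v i) ^ 4)"

definition linf_norm :: "nat \<Rightarrow> (nat \<Rightarrow> real) \<Rightarrow> real" where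
  "linf_norm N v = Max ((\<lambda>i. \<bar>v i\<bar>) ` {..<N})"

end

theory Submission
  imports Defs "HOL-Probability.Probability"
begin


definition Lv :: "nat \<Rightarrow> (nat \<Rightarrow> nat \<Rightarrow> real) \<Rightarrow> nat \<Rightarrow> (nat \<Rightarrow> real) \<Rightarrow> real" where
  "Lv n A i x = (\<Sum>j<n. A i j * x j)"

definition qf :: "nat \<Rightarrow> nat \<Rightarrow> (nat \<Rightarrow> nat \<Rightarrow> real) \<Rightarrow> (nat \<Rightarrow> real) \<Rightarrow> real" where
  "qf N n A x = (\<Sum>i<N. (Lv n A i x)\<^sup>2)"

definition nsq :: "nat \<Rightarrow> (nat \<Rightarrow> real) \<Rightarrow> real" where
  "nsq n x = (\<Sum>j<n. (x j)\<^sup>2)"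

lemma mvn_qf: "mat_vec_norm N n A x = sqrt (qf N n A x)"
  by (simp add: mat_vec_norm_def qf_def Lv_def)

lemma qf_nonneg: "0 \<le> qf N n A x"
  by (simp add: qf_def sum_nonneg)

lemma nsq_nonneg: "0 \<le> nsq n x"
  by (simp add: nsq_def sum_nonneg)

lemma Lv_lin: "Lv n A i (\<lambda>j. a * x j + b * y j) = a * Lv n A i x + b * Lv n A i y"
  by (simp add: Lv_def algebra_simps sum.distrib sum_distrib_left)

lemma qf_expand: "qf N n A (\<lambda>j. a * x j + b * y j) =
   a\<^sup>2 * qf N n A x + 2 * a * b * (\<Sum>i<N. Lv n A i x * Lv n A i y) + b\<^sup>2 * qf N n A y"
  by (simp add: qf_def Lv_lin power2_eq_square algebra_simps sum.distrib sum_distrib_left)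

lemma nsq_expand: "nsq n (\<lambda>j. a * x j + b * y j) =
   a\<^sup>2 * nsq n x + 2 * a * b * (\<Sum>j<n. x j * y j) + b\<^sup>2 * nsq n y"
  by (simp add: nsq_def power2_eq_square algebra_simps sum.distrib sum_distrib_left)

lemma psd_step:
  fixes F :: "(nat \<Rightarrow> real) \<Rightarrow> real" and Fb :: "(nat \<Rightarrow> real) \<Rightarrow> (nat \<Rightarrow> real) \<Rightarrow> real"
  assumes exp: "\<And>a b x y. F (\<lambda>j. a * x j + b * y j) = a\<^sup>2 * F x + 2 * a * b * Fb x y + b\<^sup>2 * F y"
    and nn: "\<And>w. F w \<ge> 0"
    and th: "0 < \<theta>" and Fx: "F x \<le> \<theta>\<^sup>2"
  shows "F (\<lambda>j. x j + d j) \<le> \<theta>\<^sup>2 + \<theta> + F d + \<theta> * F d"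
proof -
  define a where "a = 1 / sqrt \<theta>"
  have a2: "a\<^sup>2 = 1 / \<theta>" using th by (simp add: a_def power_divide)
  have apos: "a > 0" using th by (simp add: a_def)
  have "0 \<le> F (\<lambda>j. a * x j + (- 1 / a) * d j)" by (rule nn)
  also have "\<dots> = a\<^sup>2 * F x + 2 * a * (-1/a) * Fb x d + (-1/a)\<^sup>2 * F d" by (rule exp)
  also have "\<dots> = a\<^sup>2 * F x - 2 * Fb x d + F d / a\<^sup>2" using apos by (simp add: power_divide field_simps)
  finally have 1: "2 * Fb x d \<le> a\<^sup>2 * F x + F d / a\<^sup>2" by simp
  have "F (\<lambda>j. x j + d j) = F (\<lambda>j. 1 * x j + 1 * d j)" by simp
  also have "\<dots> = F x + 2 * Fb x d + F d" by (subst exp) simp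
  also have "\<dots> \<le> F x + F x / \<theta> + F d * \<theta> + F d" using 1 a2 by (simp add: field_simps)
  also have "\<dots> \<le> \<theta>\<^sup>2 + \<theta> + F d + \<theta> * F d"
  proof -
    have "F x / \<theta> \<le> \<theta>\<^sup>2 / \<theta>" using Fx th by (simp add: divide_right_mono)
    also have "\<dots> = \<theta>" using th by (simp add: power2_eq_square)
    finally show ?thesis using Fx by (simp add: algebra_simps)
  qed
  finally show ?thesis .
qed


lemma unit_vecs_ne: assumes "1 \<le> n" shows "(\<lambda>j. if j = 0 then 1 else 0) \<in> unit_vecs n"
proof -
  have "(\<Sum>j<n. (if j = 0 then 1 else (0::real))\<^sup>2) = (\<Sum>j<n. if j = 0 then 1 else 0)"
    by (rule sum.cong) auto
  also have "\<dots> = 1" using assms by simp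
  finally show ?thesis using assms by (auto simp: unit_vecs_def)
qed

lemma unit_coord_le: assumes "x \<in> unit_vecs n" shows "\<bar>x j\<bar> \<le> 1"
proof (cases "j < n")
  case True
  have "(x j)\<^sup>2 \<le> (\<Sum>k<n. (x k)\<^sup>2)"
    using True by (intro member_le_sum) auto
  also have "\<dots> = 1" using assms by (simp add: unit_vecs_def)
  finally show ?thesis by (simp add: abs_square_le_1)
next
  case False then show ?thesis using assms by (simp add: unit_vecs_def)
qed

definition KA :: "nat \<Rightarrow> nat \<Rightarrow> (nat \<Rightarrow> nat \<Rightarrow> real) \<Rightarrow> real" where
  "KA N n A = (\<Sum>i<N. (\<Sum>j<n. \<bar>A i j\<bar>)\<^sup>2)"

lemma qf_le_KA: assumes "x \<in> unit_vecs n" shows "qf N n A x \<le> KA N n A"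
  unfolding qf_def KA_def
proof (rule sum_mono)
  fix i
  have "\<bar>Lv n A i x\<bar> \<le> (\<Sum>j<n. \<bar>A i j * x j\<bar>)" unfolding Lv_def by (rule sum_abs)
  also have "\<dots> \<le> (\<Sum>j<n. \<bar>A i j\<bar>)"
    by (intro sum_mono) (auto simp: abs_mult intro: mult_left_le[OF unit_coord_le[OF assms]])
  finally have "\<bar>Lv n A i x\<bar> \<le> (\<Sum>j<n. \<bar>A i j\<bar>)" .
  then have "\<bar>Lv n A i x\<bar>\<^sup>2 \<le> (\<Sum>j<n. \<bar>A i j\<bar>)\<^sup>2" by (intro power_mono) auto
  then show "(Lv n A i x)\<^sup>2 \<le> (\<Sum>j<n. \<bar>A i j\<bar>)\<^sup>2" by simp
qed

lemma bdd_above_mvn: "bdd_above ((mat_vec_norm N n A) ` unit_vecs n)"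
  by (rule bdd_aboveI[where M="sqrt (KA N n A)"]) (auto simp: mvn_qf intro: qf_le_KA)

lemma bdd_below_mvn: "bdd_below ((mat_vec_norm N n A) ` unit_vecs n)"
  by (rule bdd_belowI[where m=0]) (auto simp: mvn_qf intro: qf_nonneg)

lemma smin_le: "x \<in> unit_vecs n \<Longrightarrow> s_min N n A \<le> mat_vec_norm N n A x"
  unfolding s_min_def by (rule cINF_lower[OF bdd_below_mvn])

lemma smax_ge: "x \<in> unit_vecs n \<Longrightarrow> mat_vec_norm N n A x \<le> s_max N n A"
  unfolding s_max_def by (rule cSUP_upper[OF _ bdd_above_mvn])

lemma smin_nonneg: "1 \<le> n \<Longrightarrow> 0 \<le> s_min N n A"
  unfolding s_min_def using unit_vecs_ne[of n]
  by (intro cINF_greatest) (auto simp: mvn_qf intro: qf_nonneg)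

lemma smin_le_smax: "1 \<le> n \<Longrightarrow> s_min N n A \<le> s_max N n A"
  using smin_le[OF unit_vecs_ne] smax_ge[OF unit_vecs_ne] by (meson order_trans)

lemma qf_scale: "qf N n A (\<lambda>j. c * x j) = c\<^sup>2 * qf N n A x"
  using qf_expand[of N n A c x 0 x] by simp

lemma nsq_zero: assumes "nsq n w = 0" shows "qf N n A w = 0"
proof -
  have "\<forall>j\<in>{..<n}. (w j)\<^sup>2 = 0"
    using assms unfolding nsq_def by (subst sum_nonneg_eq_0_iff[symmetric]) auto
  then have "\<And>i. Lv n A i w = 0" unfolding Lv_def by auto
  then show ?thesis by (simp add: qf_def)
qed

lemma qf_restrict: "qf N n A (\<lambda>j. if j < n then w j else 0) = qf N n A w"
  by (simp add: qf_def Lv_def)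

lemma hom_bounds:
  assumes "1 \<le> n"
  shows "(s_min N n A)\<^sup>2 * nsq n w \<le> qf N n A w \<and> qf N n A w \<le> (s_max N n A)\<^sup>2 * nsq n w"
proof (cases "nsq n w = 0")
  case True then show ?thesis by (simp add: nsq_zero)
next
  case False
  then have pos: "nsq n w > 0" using nsq_nonneg[of n w] by simp
  define r where "r = sqrt (nsq n w)"
  have r: "r > 0" "r\<^sup>2 = nsq n w" using pos by (auto simp: r_def)
  define x where "x = (\<lambda>j. if j < n then (1/r) * w j else 0)"
  have "x \<in> unit_vecs n"
  proof -
    have "(\<Sum>j<n. (x j)\<^sup>2) = (\<Sum>j<n. (w j)\<^sup>2 / r\<^sup>2)" by (auto simp: x_def power_divide)
    also have "\<dots> = nsq n w / r\<^sup>2" by (simp add: nsq_def sum_divide_distrib)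
    finally show ?thesis using r by (auto simp: unit_vecs_def x_def)
  qed
  have qx: "qf N n A x = qf N n A w / r\<^sup>2"
  proof -
    have "qf N n A x = qf N n A (\<lambda>j. (1/r) * w j)" unfolding x_def by (rule qf_restrict)
    also have "\<dots> = qf N n A w / r\<^sup>2" using qf_scale[of N n A "1/r" w] by (simp add: power_divide)
    finally show ?thesis .
  qed
  have "s_min N n A \<le> sqrt (qf N n A x)" using smin_le[OF \<open>x \<in> _\<close>] by (simp add: mvn_qf)
  then have 1: "(s_min N n A)\<^sup>2 \<le> qf N n A x"
  proof -
    have "(s_min N n A)\<^sup>2 \<le> (sqrt (qf N n A x))\<^sup>2"
      by (rule power_mono) (use smin_nonneg[OF assms, of N A] \<open>s_min N n A \<le> _\<close> in auto)
    then show ?thesis using qf_nonneg[of N n A x] by simp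
  qed
  have "sqrt (qf N n A x) \<le> s_max N n A" using smax_ge[OF \<open>x \<in> _\<close>] by (simp add: mvn_qf)
  then have 2: "qf N n A x \<le> (s_max N n A)\<^sup>2"
    using qf_nonneg[of N n A x] by (simp add: real_sqrt_le_iff sqrt_le_D)
  show ?thesis using 1 2 qx r pos by (simp add: pos_le_divide_eq pos_divide_le_eq mult.commute)
qed


lemma eps_le:
  fixes a b K :: real
  assumes h: "\<And>\<theta>. 0 < \<theta> \<Longrightarrow> \<theta> \<le> 1 \<Longrightarrow> a \<le> b + \<theta> * K" and K: "K \<ge> 0"
  shows "a \<le> b"
proof (rule ccontr)
  assume "\<not> a \<le> b"
  then have ab: "a - b > 0" by simp
  define \<theta> where "\<theta> = min 1 ((a - b) / (K + 1))"
  have th: "0 < \<theta>" "\<theta> \<le> 1" using ab K by (auto simp: \<theta>_def)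
  have "\<theta> * K \<le> (a - b) / (K + 1) * K" using K by (intro mult_right_mono) (auto simp: \<theta>_def)
  also have "\<dots> < a - b" using ab K by (simp add: field_simps)
  finally show False using h[OF th] by simp
qed

lemma unit_nsq: "x \<in> unit_vecs n \<Longrightarrow> nsq n x = 1"
  by (simp add: unit_vecs_def nsq_def)

lemma det_main:
  fixes A :: "nat \<Rightarrow> nat \<Rightarrow> real"
  assumes n1: "1 \<le> n" and t: "0 < t" "t < 1" and sg: "sg > 0"
    and FU: "F \<subseteq> unit_vecs n"
    and cov: "\<And>x. x \<in> unit_vecs n \<Longrightarrow> \<exists>y\<in>F. nsq n (\<lambda>j. y j - x j) \<le> 1/16"
    and good: "\<And>y. y \<in> F \<Longrightarrow> (1 - t/2) * sg \<le> qf N n A y \<and> qf N n A y \<le> (1 + t) * sg"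
  shows "(1 - t) * sqrt sg \<le> s_min N n A \<and> s_max N n A \<le> (1 + t) * sqrt sg"
proof -
  define Mx where "Mx = s_max N n A"
  define mn where "mn = s_min N n A"
  define P where "P = Mx\<^sup>2"
  define Q where "Q = mn\<^sup>2"
  define \<kappa> where "\<kappa> = P - Q"
  have mn0: "0 \<le> mn" using smin_nonneg[OF n1] by (simp add: mn_def)
  have mnMx: "mn \<le> Mx" using smin_le_smax[OF n1] by (simp add: mn_def Mx_def)
  have Mx0: "0 \<le> Mx" using mn0 mnMx by simp
  have QP: "Q \<le> P" unfolding P_def Q_def using mn0 mnMx by (intro power_mono) auto
  then have k0: "\<kappa> \<ge> 0" by (simp add: \<kappa>_def)
  have hb: "\<And>w. Q * nsq n w \<le> qf N n A w \<and> qf N n A w \<le> P * nsq n w"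
    using hom_bounds[OF n1] by (simp add: P_def Q_def Mx_def mn_def)
  have Une: "unit_vecs n \<noteq> {}" using unit_vecs_ne[OF n1] by blast
  define C where "C w = P * nsq n w - qf N n A w" for w
  define D where "D w = qf N n A w - Q * nsq n w" for w
  have Cexp: "\<And>a b x y. C (\<lambda>j. a * x j + b * y j) = a\<^sup>2 * C x + 2 * a * b *
      (P * (\<Sum>j<n. x j * y j) - (\<Sum>i<N. Lv n A i x * Lv n A i y)) + b\<^sup>2 * C y"
    unfolding C_def nsq_expand qf_expand by (simp add: algebra_simps)
  have Dexp: "\<And>a b x y. D (\<lambda>j. a * x j + b * y j) = a\<^sup>2 * D x + 2 * a * b *
      ((\<Sum>i<N. Lv n A i x * Lv n A i y) - Q * (\<Sum>j<n. x j * y j)) + b\<^sup>2 * D y"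
    unfolding D_def nsq_expand qf_expand by (simp add: algebra_simps)
  have Cnn: "\<And>w. C w \<ge> 0" using hb by (simp add: C_def)
  have Dnn: "\<And>w. D w \<ge> 0" using hb by (simp add: D_def)
  have Cd: "\<And>d. C d \<le> \<kappa> * nsq n d" using hb by (simp add: C_def \<kappa>_def algebra_simps)
  have Dd: "\<And>d. D d \<le> \<kappa> * nsq n d" using hb by (simp add: D_def \<kappa>_def algebra_simps)
  have step: "G (\<lambda>j. x j + d j) \<le> \<kappa>/16 + \<theta> * (2 + \<kappa>)"
    if Gexp: "\<And>a b x y. G (\<lambda>j. a * x j + b * y j) = a\<^sup>2 * G x + 2 * a * b * Gb x y + b\<^sup>2 * G y"
    and Gnn: "\<And>w. G w \<ge> 0" and Gd: "G d \<le> \<kappa> * nsq n d" and th: "0 < \<theta>" "\<theta> \<le> 1"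
    and Gx: "G x \<le> \<theta>\<^sup>2" and dn: "nsq n d \<le> 1/16"
    for G Gb x d \<theta>
  proof -
    have 1: "G (\<lambda>j. x j + d j) \<le> \<theta>\<^sup>2 + \<theta> + G d + \<theta> * G d"
      by (rule psd_step[of G Gb, OF Gexp Gnn th(1) Gx])
    have "\<kappa> * nsq n d \<le> \<kappa> * (1/16)" using dn k0 by (rule mult_left_mono)
    then have Gd': "G d \<le> \<kappa>/16" using Gd by simp
    have "\<theta>\<^sup>2 \<le> \<theta>" using th by (simp add: power2_eq_square mult_le_cancel_left1)
    moreover have "\<theta> * G d \<le> \<theta> * \<kappa>" using Gd' k0 th by (intro mult_left_mono) auto
    ultimately show ?thesis using 1 Gd' by (simp add: algebra_simps)
  qed
  have up: "P - \<kappa>/16 \<le> (1 + t) * sg"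
  proof (rule eps_le[OF _ _])
    fix \<theta> :: real assume th: "0 < \<theta>" "\<theta> \<le> 1"
    obtain x where xU: "x \<in> unit_vecs n" and Cx: "C x \<le> \<theta>\<^sup>2"
    proof (cases "P \<le> \<theta>\<^sup>2")
      case True
      obtain x where "x \<in> unit_vecs n" using Une by blast
      moreover have "C x \<le> \<theta>\<^sup>2" using True qf_nonneg[of N n A x] unit_nsq[OF \<open>x \<in> _\<close>]
        by (simp add: C_def)
      ultimately show ?thesis using that by blast
    next
      case False
      have "sqrt (P - \<theta>\<^sup>2) < sqrt P" using th by (simp add: real_sqrt_less_iff)
      then have "sqrt (P - \<theta>\<^sup>2) < Mx" using Mx0 by (simp add: P_def)
      then obtain x where "x \<in> unit_vecs n" "sqrt (P - \<theta>\<^sup>2) < mat_vec_norm N n A x"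
        unfolding Mx_def s_max_def using less_cSUP_iff[OF Une bdd_above_mvn] by blast
      moreover have "P - \<theta>\<^sup>2 < qf N n A x" using calculation(2) False
        by (simp add: mvn_qf real_sqrt_less_iff)
      then have "C x \<le> \<theta>\<^sup>2" using unit_nsq[OF \<open>x \<in> _\<close>] by (simp add: C_def)
      ultimately show ?thesis using that by blast
    qed
    obtain y where yF: "y \<in> F" and yx: "nsq n (\<lambda>j. y j - x j) \<le> 1/16" using cov[OF xU] by blast
    have "C (\<lambda>j. x j + (y j - x j)) \<le> \<kappa>/16 + \<theta> * (2 + \<kappa>)"
      by (rule step[of C, OF Cexp Cnn Cd th Cx yx])
    then have "P - qf N n A y \<le> \<kappa>/16 + \<theta> * (2 + \<kappa>)"
      using unit_nsq[of y n] yF FU by (auto simp: C_def)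
    then show "P - \<kappa>/16 \<le> (1 + t) * sg + \<theta> * (2 + \<kappa>)" using good[OF yF] by simp
  qed (use k0 in simp)
  have lo: "(1 - t/2) * sg - \<kappa>/16 \<le> Q"
  proof (rule eps_le[OF _ _])
    fix \<theta> :: real assume th: "0 < \<theta>" "\<theta> \<le> 1"
    have "sqrt Q < sqrt (Q + \<theta>\<^sup>2)" using th by (simp add: real_sqrt_less_iff)
    then have "mn < sqrt (Q + \<theta>\<^sup>2)" using mn0 by (simp add: Q_def)
    then obtain x where xU: "x \<in> unit_vecs n" and "mat_vec_norm N n A x < sqrt (Q + \<theta>\<^sup>2)"
      unfolding mn_def s_min_def using cINF_less_iff[OF Une bdd_below_mvn] by blast
    then have "qf N n A x < Q + \<theta>\<^sup>2" using qf_nonneg[of N n A x]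
      by (simp add: mvn_qf real_sqrt_less_iff)
    then have Dx: "D x \<le> \<theta>\<^sup>2" using unit_nsq[OF xU] by (simp add: D_def)
    obtain y where yF: "y \<in> F" and yx: "nsq n (\<lambda>j. y j - x j) \<le> 1/16" using cov[OF xU] by blast
    have "D (\<lambda>j. x j + (y j - x j)) \<le> \<kappa>/16 + \<theta> * (2 + \<kappa>)"
      by (rule step[of D, OF Dexp Dnn Dd th Dx yx])
    then have "qf N n A y - Q \<le> \<kappa>/16 + \<theta> * (2 + \<kappa>)"
      using unit_nsq[of y n] yF FU by (auto simp: D_def)
    then show "(1 - t/2) * sg - \<kappa>/16 \<le> Q + \<theta> * (2 + \<kappa>)" using good[OF yF] by simp
  qed (use k0 in simp)
  have Pb: "P \<le> (1 + t)\<^sup>2 * sg"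
  proof -
    have u1: "P \<le> sg + sg * t + (P-Q)/16" and u2: "sg \<le> Q + (sg * t)/2 + (P-Q)/16"
      using up lo unfolding \<kappa>_def by (simp_all add: algebra_simps)
    have "224 * P \<le> 224 * sg + 248 * (sg * t)"
    proof -
      define u where "u = sg * t"
      have "16*P \<le> 16 * sg + 16*u + (P-Q)" "16 * sg \<le> 16*Q + 8*u + (P-Q)" using u1 u2 by (simp_all add: u_def field_simps)
      then have "224 * P \<le> 224 * sg + 248 * u" by linarith
      then show ?thesis by (simp add: u_def)
    qed
    then have "224 * P \<le> (224 + 248 * t) * sg" by (simp add: algebra_simps)
    moreover have "(224 + 248 * t) * sg \<le> 224 * ((1 + t)\<^sup>2 * sg)"
      using t sg by (simp add: power2_eq_square algebra_simps)
    ultimately show ?thesis by simp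
  qed
  have Qb: "(1 - t)\<^sup>2 * sg \<le> Q"
  proof -
    have u1: "P \<le> sg + sg * t + (P-Q)/16" and u2: "sg \<le> Q + (sg * t)/2 + (P-Q)/16"
      using up lo unfolding \<kappa>_def by (simp_all add: algebra_simps)
    have "224 * sg - 136 * (sg * t) \<le> 224 * Q"
    proof -
      define u where "u = sg * t"
      have "16*P \<le> 16 * sg + 16*u + (P-Q)" "16 * sg \<le> 16*Q + 8*u + (P-Q)" using u1 u2 by (simp_all add: u_def field_simps)
      then have "224 * sg - 136 * u \<le> 224 * Q" by linarith
      then show ?thesis by (simp add: u_def)
    qed
    then have "(224 - 136 * t) * sg \<le> 224 * Q" by (simp add: algebra_simps)
    moreover have "224 * ((1 - t)\<^sup>2 * sg) \<le> (224 - 136 * t) * sg"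
    proof -
      have "224 * (1 - t)\<^sup>2 \<le> 224 - 136 * t" using t by (simp add: power2_eq_square algebra_simps)
      then have "(224 * (1 - t)\<^sup>2) * sg \<le> (224 - 136 * t) * sg" using sg by (intro mult_right_mono) auto
      then show ?thesis by simp
    qed
    ultimately show ?thesis by simp
  qed
  have "Mx \<le> (1 + t) * sqrt sg"
  proof (rule power2_le_imp_le)
    show "Mx\<^sup>2 \<le> ((1 + t) * sqrt sg)\<^sup>2" using Pb sg by (simp add: P_def power_mult_distrib)
  qed (use t sg in simp)
  moreover have "(1 - t) * sqrt sg \<le> mn"
  proof (rule power2_le_imp_le)
    show "((1 - t) * sqrt sg)\<^sup>2 \<le> mn\<^sup>2" using Qb sg by (simp add: Q_def power_mult_distrib)
  qed (use mn0 in simp)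
  ultimately show ?thesis by (simp add: Mx_def mn_def)
qed


lemma nsq_tri: "sqrt (nsq n (\<lambda>j. f j + g j)) \<le> sqrt (nsq n f) + sqrt (nsq n g)"
  using L2_set_triangle_ineq[of f g "{..<n}"] by (simp add: L2_set_def nsq_def)

abbreviation "mu n \<equiv> PiM {..<n} (\<lambda>_::nat. lborel :: real measure)"

interpretation lbps: product_sigma_finite "\<lambda>_::nat. lborel :: real measure"
  by (simp add: product_sigma_finite_def sigma_finite_lborel)

lemma lborel_affine_pre:
  fixes c s :: real and A :: "real set"
  assumes "c \<noteq> 0" "A \<in> sets lborel"
  shows "emeasure lborel A = ennreal \<bar>c\<bar> * emeasure lborel {x. s + c * x \<in> A}"
proof -
  have "emeasure lborel A = emeasure (density (distr lborel borel (\<lambda>x. s + c * x)) (\<lambda>_. ennreal \<bar>c\<bar>)) A"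
    using lborel_real_affine[OF assms(1), of s] by simp
  also have "\<dots> = ennreal \<bar>c\<bar> * emeasure (distr lborel borel (\<lambda>x. s + c * x)) A"
    using assms by (subst emeasure_density_const) auto
  also have "\<dots> = ennreal \<bar>c\<bar> * emeasure lborel ((\<lambda>x. s + c * x) -` A \<inter> space lborel)"
    using assms by (subst emeasure_distr) auto
  also have "(\<lambda>x. s + c * x) -` A \<inter> space lborel = {x. s + c * x \<in> A}" by auto
  finally show ?thesis .
qed

lemma PiM_affine:
  fixes c :: real and s :: "nat \<Rightarrow> real"
  assumes c: "c \<noteq> 0" and X: "X \<in> sets (mu n)"
  shows "emeasure (mu n) X = ennreal (\<bar>c\<bar>^n) *
    emeasure (mu n) ((\<lambda>z. \<lambda>i\<in>{..<n}. s i + c * z i) -` X \<inter> space (mu n))"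
proof -
  define T where "T = (\<lambda>z::nat\<Rightarrow>real. \<lambda>i\<in>{..<n}. s i + c * z i)"
  have Tm: "T \<in> measurable (mu n) (mu n)" unfolding T_def by measurable
  have eq: "density (distr (mu n) (mu n) T) (\<lambda>_. ennreal (\<bar>c\<bar>^n)) = mu n"
  proof (rule lbps.PiM_eqI)
    show "sets (density (distr (mu n) (mu n) T) (\<lambda>_. ennreal (\<bar>c\<bar> ^ n))) = sets (mu n)" by simp
  next
    fix A :: "nat \<Rightarrow> real set" assume A: "\<And>i. i \<in> {..<n} \<Longrightarrow> A i \<in> sets lborel"
    have PA: "Pi\<^sub>E {..<n} A \<in> sets (mu n)" using A by (intro sets_PiM_I_finite) auto
    have pre: "T -` Pi\<^sub>E {..<n} A \<inter> space (mu n) = Pi\<^sub>E {..<n} (\<lambda>i. {x. s i + c * x \<in> A i})"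
      by (auto simp: T_def space_PiM PiE_def Pi_def extensional_def)
    have "emeasure (density (distr (mu n) (mu n) T) (\<lambda>_. ennreal (\<bar>c\<bar> ^ n))) (Pi\<^sub>E {..<n} A)
        = ennreal (\<bar>c\<bar> ^ n) * emeasure (mu n) (T -` Pi\<^sub>E {..<n} A \<inter> space (mu n))"
      using PA Tm by (simp add: emeasure_density_const emeasure_distr)
    also have "\<dots> = ennreal (\<bar>c\<bar> ^ n) * (\<Prod>i<n. emeasure lborel {x. s i + c * x \<in> A i})"
    proof -
      have "\<And>i. i < n \<Longrightarrow> {x. s i + c * x \<in> A i} \<in> sets lborel"
      proof -
        fix i assume "i < n"
        then have "A i \<in> sets borel" using A by auto
        then show "{x. s i + c * x \<in> A i} \<in> sets lborel" by measurable
      qed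
      then show ?thesis unfolding pre by (subst lbps.emeasure_PiM) auto
    qed
    also have "\<dots> = (\<Prod>i<n. ennreal \<bar>c\<bar> * emeasure lborel {x. s i + c * x \<in> A i})"
      by (simp add: prod.distrib ennreal_power)
    also have "\<dots> = (\<Prod>i<n. emeasure lborel (A i))"
      using A c by (intro prod.cong refl) (simp add: lborel_affine_pre[symmetric])
    finally show "emeasure (density (distr (mu n) (mu n) T) (\<lambda>_. ennreal (\<bar>c\<bar> ^ n))) (Pi\<^sub>E {..<n} A)
        = (\<Prod>i\<in>{..<n}. emeasure lborel (A i))" by simp
  qed simp
  have "emeasure (mu n) X = emeasure (density (distr (mu n) (mu n) T) (\<lambda>_. ennreal (\<bar>c\<bar>^n))) X"
    by (simp add: eq)
  also have "\<dots> = ennreal (\<bar>c\<bar>^n) * emeasure (mu n) (T -` X \<inter> space (mu n))"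
    using X Tm by (simp add: emeasure_density_const emeasure_distr)
  finally show ?thesis by (simp add: T_def)
qed

definition Bl :: "nat \<Rightarrow> (nat \<Rightarrow> real) \<Rightarrow> real \<Rightarrow> (nat \<Rightarrow> real) set" where
  "Bl n c r = {z \<in> space (mu n). (\<Sum>i<n. (z i - c i)\<^sup>2) < r\<^sup>2}"

lemma Bl_sets: "Bl n c r \<in> sets (mu n)"
  unfolding Bl_def by measurable

lemma Bl_translate: "emeasure (mu n) (Bl n c r) = emeasure (mu n) (Bl n (\<lambda>_. 0) r)"
proof -
  have "emeasure (mu n) (Bl n c r) = ennreal (\<bar>1\<bar>^n) *
    emeasure (mu n) ((\<lambda>z. \<lambda>i\<in>{..<n}. c i + 1 * z i) -` Bl n c r \<inter> space (mu n))"
    by (rule PiM_affine) (auto simp: Bl_sets)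
  also have "(\<lambda>z. \<lambda>i\<in>{..<n}. c i + 1 * z i) -` Bl n c r \<inter> space (mu n) = Bl n (\<lambda>_. 0) r"
    by (auto simp: Bl_def space_PiM PiE_def Pi_def extensional_def)
  finally show ?thesis by simp
qed

lemma Bl_scale:
  assumes c: "c > 0"
  shows "emeasure (mu n) (Bl n (\<lambda>_. 0) (c * r)) = ennreal (c^n) * emeasure (mu n) (Bl n (\<lambda>_. 0) r)"
proof -
  have "emeasure (mu n) (Bl n (\<lambda>_. 0) (c * r)) = ennreal (\<bar>c\<bar>^n) *
    emeasure (mu n) ((\<lambda>z. \<lambda>i\<in>{..<n}. 0 + c * z i) -` Bl n (\<lambda>_. 0) (c * r) \<inter> space (mu n))"
    using c by (intro PiM_affine) (auto simp: Bl_sets)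
  also have "(\<lambda>z. \<lambda>i\<in>{..<n}. 0 + c * z i) -` Bl n (\<lambda>_. 0) (c * r) \<inter> space (mu n) = Bl n (\<lambda>_. 0) r"
  proof -
    have "\<And>z. (\<Sum>i<n. (c * z i)\<^sup>2) = c\<^sup>2 * (\<Sum>i<n. (z i)\<^sup>2)"
      by (simp add: power_mult_distrib sum_distrib_left)
    moreover have "\<And>a b. c\<^sup>2 * a < (c * b)\<^sup>2 \<longleftrightarrow> a < b\<^sup>2"
      using c by (simp add: power_mult_distrib)
    ultimately show ?thesis
      by (auto simp: Bl_def space_PiM PiE_def Pi_def extensional_def)
  qed
  finally show ?thesis using c by simp
qed

lemma Bl_finite: "emeasure (mu n) (Bl n (\<lambda>_. 0) r) < \<infinity>"
proof -
  have "Bl n (\<lambda>_. 0) r \<subseteq> Pi\<^sub>E {..<n} (\<lambda>_. {-\<bar>r\<bar>..\<bar>r\<bar>})"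
  proof
    fix z assume z: "z \<in> Bl n (\<lambda>_. 0) r"
    have "\<And>i. i < n \<Longrightarrow> \<bar>z i\<bar> \<le> \<bar>r\<bar>"
    proof -
      fix i assume i: "i < n"
      have "(z i)\<^sup>2 \<le> (\<Sum>i<n. (z i)\<^sup>2)" using i by (intro member_le_sum) auto
      also have "\<dots> < r\<^sup>2" using z by (simp add: Bl_def)
      finally show "\<bar>z i\<bar> \<le> \<bar>r\<bar>" by (simp add: abs_le_square_iff)
    qed
    then show "z \<in> Pi\<^sub>E {..<n} (\<lambda>_. {-\<bar>r\<bar>..\<bar>r\<bar>})" using z
      by (auto simp: Bl_def space_PiM PiE_def Pi_def abs_le_iff) (smt (verit))
  qed
  then have "emeasure (mu n) (Bl n (\<lambda>_. 0) r) \<le> emeasure (mu n) (Pi\<^sub>E {..<n} (\<lambda>_. {-\<bar>r\<bar>..\<bar>r\<bar>}))"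
    by (intro emeasure_mono) auto
  also have "\<dots> = (\<Prod>i<n. emeasure lborel {-\<bar>r\<bar>..\<bar>r\<bar>})" by (subst lbps.emeasure_PiM) auto
  also have "\<dots> = ennreal ((2 * \<bar>r\<bar>)^n)" by (simp add: ennreal_power)
  also have "\<dots> < \<infinity>" by simp
  finally show ?thesis .
qed

lemma Bl_pos: assumes r: "r > 0" shows "emeasure (mu n) (Bl n (\<lambda>_. 0) r) > 0"
proof -
  define \<delta> where "\<delta> = r / (real n + 1)"
  have d: "\<delta> > 0" using r by (simp add: \<delta>_def)
  have "Pi\<^sub>E {..<n} (\<lambda>_. {-\<delta><..<\<delta>}) \<subseteq> Bl n (\<lambda>_. 0) r"
  proof
    fix z assume z: "z \<in> Pi\<^sub>E {..<n} (\<lambda>_. {-\<delta><..<\<delta>})"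
    have "(\<Sum>i<n. (z i)\<^sup>2) \<le> (\<Sum>i<n. \<delta>\<^sup>2)"
    proof (intro sum_mono)
      fix i assume "i \<in> {..<n}"
      then have "\<bar>z i\<bar> \<le> \<bar>\<delta>\<bar>" using z by (auto simp: PiE_def Pi_def)
      then show "(z i)\<^sup>2 \<le> \<delta>\<^sup>2" by (simp add: abs_le_square_iff)
    qed
    also have "\<dots> = real n * \<delta>\<^sup>2" by simp
    also have "\<dots> < r\<^sup>2"
    proof -
      have "real n * \<delta>\<^sup>2 = r\<^sup>2 * (real n / (real n + 1)\<^sup>2)"
        by (simp add: \<delta>_def power_divide)
      also have "real n / (real n + 1)\<^sup>2 < 1"
        by (simp add: power2_eq_square divide_less_eq algebra_simps add_pos_nonneg)
      then have "r\<^sup>2 * (real n / (real n + 1)\<^sup>2) < r\<^sup>2 * 1" using r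
        by (intro mult_strict_left_mono) auto
      finally show ?thesis by simp
    qed
    finally show "z \<in> Bl n (\<lambda>_. 0) r" using z by (auto simp: Bl_def space_PiM PiE_def)
  qed
  then have "emeasure (mu n) (Pi\<^sub>E {..<n} (\<lambda>_. {-\<delta><..<\<delta>})) \<le> emeasure (mu n) (Bl n (\<lambda>_. 0) r)"
    by (intro emeasure_mono Bl_sets)
  moreover have "emeasure (mu n) (Pi\<^sub>E {..<n} (\<lambda>_. {-\<delta><..<\<delta>})) = (\<Prod>i<n. emeasure lborel {-\<delta><..<\<delta>})"
    by (subst lbps.emeasure_PiM) auto
  moreover have "(\<Prod>i<n. emeasure lborel {-\<delta><..<\<delta>}) = ennreal ((2 * \<delta>)^n)"
    using d by (simp add: ennreal_power)
  moreover have "ennreal ((2 * \<delta>)^n) > 0" using d by simp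
  ultimately show ?thesis by (metis order_less_le_trans)
qed


lemma sqrt_lt_sq: "0 < (r::real) \<Longrightarrow> a < r\<^sup>2 \<Longrightarrow> sqrt a < r"
  using real_sqrt_less_mono[of a "r\<^sup>2"] by (cases "0 \<le> a") auto

lemma sq_lt_sqrt: "0 \<le> (a::real) \<Longrightarrow> sqrt a < r \<Longrightarrow> a < r\<^sup>2"
proof -
  assume a: "0 \<le> a" and s: "sqrt a < r"
  have "(sqrt a)\<^sup>2 < r\<^sup>2" using s a by (intro power_strict_mono) auto
  then show "a < r\<^sup>2" using a by simp
qed

lemma nsq_sym: "nsq n (\<lambda>j. x j - y j) = nsq n (\<lambda>j. y j - x j)"
  unfolding nsq_def by (intro sum.cong refl) (simp add: power2_commute)

lemma sep_card:
  assumes e: "\<epsilon> > 0" and F: "finite F" "F \<subseteq> unit_vecs n"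
    and sep: "\<And>y y'. y \<in> F \<Longrightarrow> y' \<in> F \<Longrightarrow> y \<noteq> y' \<Longrightarrow> \<epsilon>\<^sup>2 < nsq n (\<lambda>j. y j - y' j)"
  shows "real (card F) \<le> (1 + 2/\<epsilon>)^n"
proof -
  define r where "r = \<epsilon> / 2"
  have r: "r > 0" using e by (simp add: r_def)
  define B where "B y = Bl n y r" for y
  have disj: "disjoint_family_on B F"
  unfolding disjoint_family_on_def
  proof (intro ballI impI, rule ccontr)
    fix y y' assume yF: "y \<in> F" "y' \<in> F" "y \<noteq> y'" and ne: "B y \<inter> B y' \<noteq> {}"
    then obtain z where z: "z \<in> B y" "z \<in> B y'" by blast
    have 1: "sqrt (nsq n (\<lambda>j. y j - z j)) < r"
    proof -
      have "nsq n (\<lambda>j. y j - z j) < r\<^sup>2" using z(1) nsq_sym[of n z y]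
        by (simp add: B_def Bl_def nsq_def)
      then show ?thesis using r by (intro sqrt_lt_sq)
    qed
    have 2: "sqrt (nsq n (\<lambda>j. z j - y' j)) < r"
    proof -
      have "nsq n (\<lambda>j. z j - y' j) < r\<^sup>2" using z(2) by (simp add: B_def Bl_def nsq_def)
      then show ?thesis using r by (intro sqrt_lt_sq)
    qed
    have "sqrt (nsq n (\<lambda>j. (y j - z j) + (z j - y' j))) < \<epsilon>"
      using nsq_tri[of n "\<lambda>j. y j - z j" "\<lambda>j. z j - y' j"] 1 2 by (simp add: r_def)
    then have "sqrt (nsq n (\<lambda>j. y j - y' j)) < \<epsilon>" by simp
    then have "nsq n (\<lambda>j. y j - y' j) < \<epsilon>\<^sup>2" using nsq_nonneg by (intro sq_lt_sqrt)
    then show False using sep[OF yF] by simp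
  qed
  have sub: "(\<Union>y\<in>F. B y) \<subseteq> Bl n (\<lambda>_. 0) (1 + r)"
  proof
    fix z assume "z \<in> (\<Union>y\<in>F. B y)"
    then obtain y where y: "y \<in> F" "z \<in> B y" by blast
    have 1: "sqrt (nsq n (\<lambda>j. z j - y j)) < r"
    proof -
      have "nsq n (\<lambda>j. z j - y j) < r\<^sup>2" using y(2) by (simp add: B_def Bl_def nsq_def)
      then show ?thesis using r by (intro sqrt_lt_sq)
    qed
    have 2: "sqrt (nsq n y) = 1" using y(1) F(2) unit_nsq by auto
    have "sqrt (nsq n (\<lambda>j. (z j - y j) + y j)) < 1 + r"
      using nsq_tri[of n "\<lambda>j. z j - y j" y] 1 2 by simp
    then have "sqrt (nsq n z) < 1 + r" by simp
    then have "nsq n z < (1 + r)\<^sup>2" using nsq_nonneg by (intro sq_lt_sqrt)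
    then show "z \<in> Bl n (\<lambda>_. 0) (1 + r)" using y(2) by (simp add: B_def Bl_def nsq_def)
  qed
  define m where "m = emeasure (mu n) (Bl n (\<lambda>_. 0) r)"
  have m: "0 < m" "m < \<infinity>" using Bl_pos[OF r] Bl_finite by (auto simp: m_def)
  define K where "K = (1 + r) / r"
  have K: "K > 0" "K * r = 1 + r" using r by (auto simp: K_def)
  have By: "emeasure (mu n) (B y) = m" for y unfolding B_def m_def by (rule Bl_translate)
  have "of_nat (card F) * m = (\<Sum>y\<in>F. emeasure (mu n) (B y))"
    by (simp add: By)
  also have "\<dots> = emeasure (mu n) (\<Union>y\<in>F. B y)"
    by (intro sum_emeasure disj F(1)) (auto simp: B_def Bl_sets)
  also have "\<dots> \<le> emeasure (mu n) (Bl n (\<lambda>_. 0) (1 + r))"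
    using sub by (intro emeasure_mono Bl_sets)
  also have "\<dots> = ennreal (K^n) * m"
    using Bl_scale[OF K(1), of n r] K by (simp add: m_def)
  finally have le: "of_nat (card F) * m \<le> ennreal (K^n) * m" .
  obtain m' where m': "m = ennreal m'" "m' > 0" using m
    by (cases m) (auto simp: ennreal_less_zero_iff)
  have "ennreal (real (card F) * m') \<le> ennreal (K^n * m')"
    using le m' K by (simp add: ennreal_mult' ennreal_of_nat_eq_real_of_nat)
  then have "real (card F) * m' \<le> K^n * m'"
    using m' K by (subst (asm) ennreal_le_iff) auto
  then have "real (card F) \<le> K^n" using m' by simp
  moreover have "K = 1 + 2/\<epsilon>" using e by (simp add: K_def r_def field_simps)
  ultimately show ?thesis by simp
qed

definition sepd :: "nat \<Rightarrow> real \<Rightarrow> (nat \<Rightarrow> real) set \<Rightarrow> bool" where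
  "sepd n \<epsilon> F \<longleftrightarrow> (\<forall>y\<in>F. \<forall>y'\<in>F. y \<noteq> y' \<longrightarrow> \<epsilon>\<^sup>2 < nsq n (\<lambda>j. y j - y' j))"

lemma net_exists:
  assumes e: "\<epsilon> > 0"
  shows "\<exists>F. finite F \<and> F \<subseteq> unit_vecs n \<and> real (card F) \<le> (1 + 2/\<epsilon>)^n \<and>
      (\<forall>x\<in>unit_vecs n. \<exists>y\<in>F. nsq n (\<lambda>j. y j - x j) \<le> \<epsilon>\<^sup>2)"
proof -
  define S where "S = {F. finite F \<and> F \<subseteq> unit_vecs n \<and> sepd n \<epsilon> F}"
  define Bd where "Bd = nat \<lfloor>(1 + 2/\<epsilon>)^n\<rfloor>"
  have cardS: "real (card F) \<le> (1 + 2/\<epsilon>)^n" if "F \<in> S" for F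
    using that e by (intro sep_card) (auto simp: S_def sepd_def)
  have fin: "finite (card ` S)"
  proof (rule finite_subset)
    show "card ` S \<subseteq> {..Bd}" using cardS by (auto simp: Bd_def le_nat_floor)
  qed simp
  have ne: "{} \<in> S" by (simp add: S_def sepd_def)
  define k where "k = Max (card ` S)"
  have "k \<in> card ` S" unfolding k_def using fin ne by (intro Max_in) auto
  then obtain F where FS: "F \<in> S" and Fk: "card F = k" by blast
  have cov: "\<exists>y\<in>F. nsq n (\<lambda>j. y j - x j) \<le> \<epsilon>\<^sup>2" if xU: "x \<in> unit_vecs n" for x
  proof (rule ccontr)
    assume "\<not> ?thesis"
    then have far: "\<And>y. y \<in> F \<Longrightarrow> \<epsilon>\<^sup>2 < nsq n (\<lambda>j. y j - x j)" by auto
    have xF: "x \<notin> F"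
    proof
      assume "x \<in> F"
      then have "\<epsilon>\<^sup>2 < nsq n (\<lambda>j. x j - x j)" by (rule far)
      then show False using e by (simp add: nsq_def)
    qed
    have "insert x F \<in> S"
      using FS xU far nsq_sym[of n x] by (auto simp: S_def sepd_def)
    then have "card (insert x F) \<le> k" unfolding k_def using fin by (intro Max_ge) auto
    moreover have "card (insert x F) = k + 1" using xF FS Fk by (simp add: S_def)
    ultimately show False by simp
  qed
  have "finite F" "F \<subseteq> unit_vecs n" using FS by (auto simp: S_def)
  then show ?thesis using cardS[OF FS] cov by blast
qed


lemma ln_ineq1:
  fixes w :: real
  assumes w: "0 \<le> w" "w < 1"
  shows "- ln (1 - w) \<le> w + w\<^sup>2 / (2 * (1 - w))"
proof -
  define f where "f x = x / 2 + 1 / (2 * (1 - x)) + ln (1 - x)" for x :: real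
  have "f 0 \<le> f w"
  proof (rule DERIV_nonneg_imp_nondecreasing[OF w(1)])
    fix x :: real assume x: "0 \<le> x" "x \<le> w"
    then have x1: "x < 1" using w by simp
    have ne: "1 - x \<noteq> 0" using x1 by simp
    have "(f has_real_derivative (x\<^sup>2 / (2 * (1 - x)\<^sup>2))) (at x)"
      unfolding f_def using x1 apply (auto intro!: derivative_eq_intros)
      using ne by (simp add: divide_simps power2_eq_square) (simp add: algebra_simps)?
    then show "\<exists>y. (f has_real_derivative y) (at x) \<and> 0 \<le> y"
      by (intro exI[of _ "x\<^sup>2 / (2 * (1 - x)\<^sup>2)"]) auto
  qed
  moreover have "w\<^sup>2 / (2 * (1 - w)) = w / 2 + 1 / (2 * (1 - w)) - 1/2 - w"
    using w by (simp add: field_simps power2_eq_square) (simp add: algebra_simps)?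
  ultimately show ?thesis by (simp add: f_def)
qed

lemma ln_ineq2:
  fixes v :: real
  assumes v: "0 \<le> v"
  shows "v - v\<^sup>2 / 2 \<le> ln (1 + v)"
proof -
  define f where "f x = ln (1 + x) - x + x\<^sup>2 / 2" for x :: real
  have "f 0 \<le> f v"
  proof (rule DERIV_nonneg_imp_nondecreasing[OF v])
    fix x :: real assume x: "0 \<le> x" "x \<le> v"
    have "(f has_real_derivative (x\<^sup>2 / (1 + x))) (at x)"
      unfolding f_def
      using x by (auto intro!: derivative_eq_intros simp: field_simps power2_eq_square)
    then show "\<exists>y. (f has_real_derivative y) (at x) \<and> 0 \<le> y"
      using x by (intro exI[of _ "x\<^sup>2 / (1 + x)"]) auto
  qed
  then show ?thesis by (simp add: f_def)
qed

lemma mgf_bound_pos: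
  fixes \<theta> :: real
  assumes "0 \<le> \<theta>" "\<theta> < 1/2"
  shows "exp (- \<theta>) / sqrt (1 - 2 * \<theta>) \<le> exp (\<theta>\<^sup>2 / (1 - 2 * \<theta>))"
proof -
  have pos: "1 - 2 * \<theta> > 0" using assms by simp
  have "sqrt (1 - 2 * \<theta>) = exp (ln (1 - 2 * \<theta>) / 2)"
    using pos by (simp add: powr_half_sqrt[symmetric] powr_def)
  then have eq: "exp (- \<theta>) / sqrt (1 - 2 * \<theta>) = exp (- \<theta> - ln (1 - 2 * \<theta>) / 2)"
    by (simp add: exp_diff)
  have "- ln (1 - 2 * \<theta>) \<le> 2 * \<theta> + (2 * \<theta>)\<^sup>2 / (2 * (1 - 2 * \<theta>))"
    using ln_ineq1[of "2 * \<theta>"] assms by simp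
  then have "- \<theta> - ln (1 - 2 * \<theta>) / 2 \<le> \<theta>\<^sup>2 / (1 - 2 * \<theta>)"
    using pos by (simp add: power2_eq_square field_simps)
  then show ?thesis unfolding eq by simp
qed

lemma mgf_bound_neg:
  fixes \<theta> :: real
  assumes "\<theta> \<le> 0"
  shows "exp (- \<theta>) / sqrt (1 - 2 * \<theta>) \<le> exp (\<theta>\<^sup>2)"
proof -
  have pos: "1 - 2 * \<theta> > 0" using assms by simp
  have "sqrt (1 - 2 * \<theta>) = exp (ln (1 - 2 * \<theta>) / 2)"
    using pos by (simp add: powr_half_sqrt[symmetric] powr_def)
  then have eq: "exp (- \<theta>) / sqrt (1 - 2 * \<theta>) = exp (- \<theta> - ln (1 - 2 * \<theta>) / 2)"
    by (simp add: exp_diff)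
  have "(- 2 * \<theta>) - (- 2 * \<theta>)\<^sup>2 / 2 \<le> ln (1 + (- 2 * \<theta>))"
    using ln_ineq2[of "-2 * \<theta>"] assms by simp
  then have "- \<theta> - ln (1 - 2 * \<theta>) / 2 \<le> \<theta>\<^sup>2"
    by (simp add: power2_eq_square field_simps)
  then show ?thesis unfolding eq by simp
qed


lemma std_times_exp:
  fixes \<theta> x :: real
  assumes th: "\<theta> < 1/2"
  shows "std_normal_density x * exp (\<theta> * (x\<^sup>2 - 1)) =
    (exp (- \<theta>) / sqrt (1 - 2 * \<theta>)) * normal_density 0 (1 / sqrt (1 - 2 * \<theta>)) x"
proof -
  define c where "c = 1 - 2 * \<theta>"
  have c: "c > 0" using th by (simp add: c_def)
  have s2: "(1 / sqrt c)\<^sup>2 = 1 / c" using c by (simp add: power_divide)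
  have "normal_density 0 (1 / sqrt c) x = 1 / sqrt (2 * pi / c) * exp (- x\<^sup>2 * c / 2)"
    unfolding normal_density_def s2 using c by (simp add: field_simps)
  also have "1 / sqrt (2 * pi / c) = sqrt c / sqrt (2 * pi)"
    using c by (simp add: real_sqrt_divide)
  finally have nd: "normal_density 0 (1 / sqrt c) x = sqrt c / sqrt (2 * pi) * exp (- x\<^sup>2 * c / 2)" .
  have "(exp (- \<theta>) / sqrt c) * (sqrt c / sqrt (2 * pi) * exp (- x\<^sup>2 * c / 2))
      = exp (- \<theta>) * exp (- x\<^sup>2 * c / 2) / sqrt (2 * pi)"
    using c by (simp add: field_simps)
  also have "exp (- \<theta>) * exp (- x\<^sup>2 * c / 2) = exp (- x\<^sup>2 / 2) * exp (\<theta> * (x\<^sup>2 - 1))"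
    by (simp add: exp_add[symmetric] c_def algebra_simps add_divide_distrib[symmetric])
  finally show ?thesis unfolding c_def[symmetric] nd std_normal_density_def by simp
qed

context prob_space
begin

lemma mgf_sq:
  assumes X: "distributed M lborel X std_normal_density" and th: "\<theta> < 1/2"
  shows "(\<integral>\<^sup>+\<omega>. ennreal (exp (\<theta> * ((X \<omega>)\<^sup>2 - 1))) \<partial>M) = ennreal (exp (- \<theta>) / sqrt (1 - 2 * \<theta>))"
proof -
  define s where "s = 1 / sqrt (1 - 2 * \<theta>)"
  have s: "s > 0" using th by (simp add: s_def)
  define k where "k = exp (- \<theta>) / sqrt (1 - 2 * \<theta>)"
  have k: "k > 0" using th by (simp add: k_def)
  have "(\<integral>\<^sup>+\<omega>. ennreal (exp (\<theta> * ((X \<omega>)\<^sup>2 - 1))) \<partial>M)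
      = (\<integral>\<^sup>+x. ennreal (std_normal_density x) * ennreal (exp (\<theta> * (x\<^sup>2 - 1))) \<partial>lborel)"
    by (rule distributed_nn_integral[OF X, symmetric]) measurable
  also have "\<dots> = (\<integral>\<^sup>+x. ennreal k * ennreal (normal_density 0 s x) \<partial>lborel)"
    using th by (intro nn_integral_cong) (simp add: ennreal_mult[symmetric] std_times_exp k_def s_def)
  also have "\<dots> = ennreal k * (\<integral>\<^sup>+x. ennreal (normal_density 0 s x) \<partial>lborel)"
    by (rule nn_integral_cmult) measurable
  also have "(\<integral>\<^sup>+x. ennreal (normal_density 0 s x) \<partial>lborel) = 1"
    using s by (subst nn_integral_eq_integral) auto
  finally show ?thesis by (simp add: k_def)
qed

lemma chernoff:
  fixes G :: "'i \<Rightarrow> 'a \<Rightarrow> real" and \<theta> :: "'i \<Rightarrow> real"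
  assumes I: "finite I" and ind: "indep_vars (\<lambda>_. borel) G I"
    and dist: "\<And>i. i \<in> I \<Longrightarrow> distributed M lborel (G i) std_normal_density"
    and th: "\<And>i. i \<in> I \<Longrightarrow> \<theta> i < 1/2"
  shows "emeasure M {\<omega> \<in> space M. r \<le> (\<Sum>i\<in>I. \<theta> i * ((G i \<omega>)\<^sup>2 - 1))}
    \<le> ennreal (exp (- r) * (\<Prod>i\<in>I. exp (- \<theta> i) / sqrt (1 - 2 * \<theta> i)))"
proof -
  have rv: "\<And>i. i \<in> I \<Longrightarrow> G i \<in> borel_measurable M"
    using ind by (auto simp: indep_vars_def)
  define Z where "Z \<omega> = (\<Sum>i\<in>I. \<theta> i * ((G i \<omega>)\<^sup>2 - 1))" for \<omega>
  have Zm: "Z \<in> borel_measurable M" unfolding Z_def using rv by measurable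
  have setm: "{\<omega> \<in> space M. r \<le> Z \<omega>} \<in> sets M" using Zm by measurable
  have "emeasure M {\<omega> \<in> space M. r \<le> Z \<omega>} = (\<integral>\<^sup>+\<omega>. indicator {\<omega> \<in> space M. r \<le> Z \<omega>} \<omega> \<partial>M)"
    using setm by simp
  also have "\<dots> \<le> (\<integral>\<^sup>+\<omega>. ennreal (exp (Z \<omega> - r)) \<partial>M)"
    by (intro nn_integral_mono) (auto simp: indicator_def)
  also have "\<dots> = (\<integral>\<^sup>+\<omega>. ennreal (exp (- r)) * (\<Prod>i\<in>I. ennreal (exp (\<theta> i * ((G i \<omega>)\<^sup>2 - 1)))) \<partial>M)"
  proof (intro nn_integral_cong)
    fix \<omega>
    have "exp (Z \<omega> - r) = exp (- r) * (\<Prod>i\<in>I. exp (\<theta> i * ((G i \<omega>)\<^sup>2 - 1)))"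
      unfolding Z_def using I by (simp add: exp_sum exp_diff exp_minus field_simps)
    then show "ennreal (exp (Z \<omega> - r)) = ennreal (exp (- r)) * (\<Prod>i\<in>I. ennreal (exp (\<theta> i * ((G i \<omega>)\<^sup>2 - 1))))"
      by (simp add: ennreal_mult prod_ennreal prod_nonneg)
  qed
  also have "\<dots> = ennreal (exp (- r)) * (\<integral>\<^sup>+\<omega>. (\<Prod>i\<in>I. ennreal (exp (\<theta> i * ((G i \<omega>)\<^sup>2 - 1)))) \<partial>M)"
  proof (rule nn_integral_cmult)
    show "(\<lambda>\<omega>. \<Prod>i\<in>I. ennreal (exp (\<theta> i * ((G i \<omega>)\<^sup>2 - 1)))) \<in> borel_measurable M"
    proof (rule borel_measurable_prod_ennreal)
      fix i assume "i \<in> I"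
      then have [measurable]: "G i \<in> borel_measurable M" by (rule rv)
      show "(\<lambda>\<omega>. ennreal (exp (\<theta> i * ((G i \<omega>)\<^sup>2 - 1)))) \<in> borel_measurable M" by measurable
    qed
  qed
  also have "(\<integral>\<^sup>+\<omega>. (\<Prod>i\<in>I. ennreal (exp (\<theta> i * ((G i \<omega>)\<^sup>2 - 1)))) \<partial>M)
      = (\<Prod>i\<in>I. \<integral>\<^sup>+\<omega>. ennreal (exp (\<theta> i * ((G i \<omega>)\<^sup>2 - 1))) \<partial>M)"
  proof (rule indep_vars_nn_integral[OF I(1)])
    show "indep_vars (\<lambda>_. borel) (\<lambda>i \<omega>. ennreal (exp (\<theta> i * ((G i \<omega>)\<^sup>2 - 1)))) I"
      by (rule indep_vars_compose2[OF ind]) measurable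
  qed simp
  also have "\<dots> = (\<Prod>i\<in>I. ennreal (exp (- \<theta> i) / sqrt (1 - 2 * \<theta> i)))"
    by (intro prod.cong refl mgf_sq dist th)
  also have "\<dots> = ennreal (\<Prod>i\<in>I. exp (- \<theta> i) / sqrt (1 - 2 * \<theta> i))"
  proof (rule prod_ennreal)
    fix i assume "i \<in> I"
    then have "1 - 2 * \<theta> i > 0" using th[of i] by simp
    then show "0 \<le> exp (- \<theta> i) / sqrt (1 - 2 * \<theta> i)" by simp
  qed
  finally show ?thesis unfolding Z_def by (simp add: ennreal_mult')
qed

end


context prob_space
begin

lemma lin_comb_normal:
  fixes X :: "nat \<Rightarrow> 'a \<Rightarrow> real"
  assumes J: "finite J" and ind: "indep_vars (\<lambda>_. borel) X J"
    and dist: "\<And>j. j \<in> J \<Longrightarrow> distributed M lborel (X j) std_normal_density"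
    and y: "(\<Sum>j\<in>J. (y j)\<^sup>2) = 1"
  shows "distributed M lborel (\<lambda>\<omega>. \<Sum>j\<in>J. y j * X j \<omega>) std_normal_density"
proof -
  define J' where "J' = {j\<in>J. y j \<noteq> 0}"
  have J'J: "J' \<subseteq> J" and finJ': "finite J'" using J by (auto simp: J'_def)
  have sumJ': "(\<Sum>j\<in>J'. (y j)\<^sup>2) = (\<Sum>j\<in>J. (y j)\<^sup>2)"
    using J by (intro sum.mono_neutral_left) (auto simp: J'_def)
  have neJ': "J' \<noteq> {}"
  proof
    assume "J' = {}"
    then have "(\<Sum>j\<in>J. (y j)\<^sup>2) = 0" using sumJ' by simp
    then show False using y by simp
  qed
  define Z where "Z j \<omega> = y j * X j \<omega>" for j \<omega>
  have dZ: "distributed M lborel (Z j) (normal_density 0 \<bar>y j\<bar>)" if "j \<in> J'" for j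
  proof -
    have "y j \<noteq> 0" "j \<in> J" using that by (auto simp: J'_def)
    from normal_density_affine[OF dist[OF \<open>j \<in> J\<close>], of "y j" 0] \<open>y j \<noteq> 0\<close>
    show ?thesis by (simp add: Z_def[abs_def])
  qed
  have indZ: "indep_vars (\<lambda>_. borel) Z J'"
    unfolding Z_def
    by (rule indep_vars_compose2[OF indep_vars_subset[OF ind J'J]]) measurable
  have "distributed M lborel (\<lambda>x. \<Sum>j\<in>J'. Z j x)
      (normal_density (\<Sum>j\<in>J'. 0) (sqrt (\<Sum>j\<in>J'. \<bar>y j\<bar>\<^sup>2)))"
    by (rule sum_indep_normal[OF finJ' neJ' indZ _ dZ]) (auto simp: J'_def)
  moreover have "(\<lambda>x. \<Sum>j\<in>J'. Z j x) = (\<lambda>\<omega>. \<Sum>j\<in>J. y j * X j \<omega>)"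
  proof
    fix x
    show "(\<Sum>j\<in>J'. Z j x) = (\<Sum>j\<in>J. y j * X j x)"
      unfolding Z_def by (rule sum.mono_neutral_left[OF J J'J]) (auto simp: J'_def)
  qed
  moreover have "sqrt (\<Sum>j\<in>J'. \<bar>y j\<bar>\<^sup>2) = 1" using sumJ' y by simp
  ultimately show ?thesis by simp
qed

lemma rows_indep:
  fixes S :: "'a \<Rightarrow> nat \<Rightarrow> nat \<Rightarrow> real"
  assumes ind: "indep_vars (\<lambda>_. borel) (\<lambda>p \<omega>. S \<omega> (fst p) (snd p)) ({..<N} \<times> {..<n})"
  shows "indep_vars (\<lambda>_. borel) (\<lambda>i \<omega>. \<Sum>j<n. S \<omega> i j * y j) {..<N}"
proof -
  define K where "K i = {i} \<times> {..<n}" for i :: nat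
  have 1: "indep_vars (\<lambda>i. PiM (K i) (\<lambda>_. borel))
      (\<lambda>i \<omega>. restrict (\<lambda>p. S \<omega> (fst p) (snd p)) (K i)) {..<N}"
    by (rule indep_vars_restrict[OF ind]) (auto simp: K_def disjoint_family_on_def)
  have 2: "indep_vars (\<lambda>_. borel)
      (\<lambda>i \<omega>. (\<lambda>f. \<Sum>j<n. f (i, j) * y j) (restrict (\<lambda>p. S \<omega> (fst p) (snd p)) (K i))) {..<N}"
  proof (rule indep_vars_compose2[OF 1])
    fix i assume "i \<in> {..<N}"
    show "(\<lambda>f. \<Sum>j<n. f (i, j) * y j) \<in> borel_measurable (PiM (K i) (\<lambda>_. borel))"
    proof (rule borel_measurable_sum)
      fix j assume "j \<in> {..<n}"
      then have "(i, j) \<in> K i" by (simp add: K_def)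
      then have [measurable]: "(\<lambda>f. f (i, j)) \<in> borel_measurable (PiM (K i) (\<lambda>_. borel))"
        by (rule measurable_component_singleton)
      show "(\<lambda>f. f (i, j) * y j) \<in> borel_measurable (PiM (K i) (\<lambda>_. borel))" by measurable
    qed
  qed
  show ?thesis
    by (rule indep_vars_cong[THEN iffD1, OF refl _ refl 2]) (auto simp: K_def)
qed

lemma row_normal:
  fixes S :: "'a \<Rightarrow> nat \<Rightarrow> nat \<Rightarrow> real"
  assumes ind: "indep_vars (\<lambda>_. borel) (\<lambda>p \<omega>. S \<omega> (fst p) (snd p)) ({..<N} \<times> {..<n})"
    and dist: "\<And>i j. i < N \<Longrightarrow> j < n \<Longrightarrow> distributed M lborel (\<lambda>\<omega>. S \<omega> i j) std_normal_density"
    and i: "i < N" and y: "y \<in> unit_vecs n"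
  shows "distributed M lborel (\<lambda>\<omega>. \<Sum>j<n. S \<omega> i j * y j) std_normal_density"
proof -
  define K where "K j = {(i, j)}" for j :: nat
  have 1: "indep_vars (\<lambda>j. PiM (K j) (\<lambda>_. borel))
      (\<lambda>j \<omega>. restrict (\<lambda>p. S \<omega> (fst p) (snd p)) (K j)) {..<n}"
    by (rule indep_vars_restrict[OF ind]) (auto simp: K_def disjoint_family_on_def i)
  have 2: "indep_vars (\<lambda>_. borel)
      (\<lambda>j \<omega>. (\<lambda>f. f (i, j)) (restrict (\<lambda>p. S \<omega> (fst p) (snd p)) (K j))) {..<n}"
  proof (rule indep_vars_compose2[OF 1])
    fix j assume "j \<in> {..<n}"
    have "(i, j) \<in> K j" by (simp add: K_def)
    then show "(\<lambda>f. f (i, j)) \<in> borel_measurable (PiM (K j) (\<lambda>_. borel))"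
      by (rule measurable_component_singleton)
  qed
  have 3: "indep_vars (\<lambda>_. borel) (\<lambda>j \<omega>. S \<omega> i j) {..<n}"
    by (rule indep_vars_cong[THEN iffD1, OF refl _ refl 2]) (auto simp: K_def)
  have "distributed M lborel (\<lambda>\<omega>. \<Sum>j<n. y j * S \<omega> i j) std_normal_density"
    by (rule lin_comb_normal[OF _ 3]) (use dist i y in \<open>auto simp: unit_vecs_def\<close>)
  then show ?thesis by (simp add: mult.commute)
qed

end


lemma opt_upper:
  fixes a :: "'i \<Rightarrow> real"
  assumes I: "finite I" and A2: "A2 = (\<Sum>i\<in>I. (a i)\<^sup>2)" "A2 > 0" and c: "c > 0"
    and a: "\<And>i. i \<in> I \<Longrightarrow> 0 \<le> a i \<and> a i \<le> c"
    and x: "x > 0" and u: "2 * sqrt (A2 * x) + 2 * c * x \<le> u"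
  defines "w \<equiv> sqrt (x / A2)"
  defines "s \<equiv> w / (1 + 2 * c * w)"
  shows "s > 0" "2 * s * c < 1"
    "- s * u + (\<Sum>i\<in>I. (s * a i)\<^sup>2 / (1 - 2 * (s * a i))) \<le> - x"
proof -
  have w: "w > 0" using x A2 by (simp add: w_def)
  have d: "1 + 2 * c * w > 0" using w c by (simp add: add_pos_pos)
  show s: "s > 0" using w d by (simp add: s_def)
  have sc: "2 * s * c = 2 * c * w / (1 + 2 * c * w)" by (simp add: s_def)
  show sc1: "2 * s * c < 1" unfolding sc using d by simp
  have wA: "A2 * w\<^sup>2 = x" using x A2 by (simp add: w_def)
  have sq: "sqrt (A2 * x) = A2 * w"
  proof -
    have "A2 * x = (A2 * w)\<^sup>2" using wA by (simp add: power2_eq_square algebra_simps)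
    then show ?thesis using A2 w by simp
  qed
  have one: "1 - 2 * s * c = 1 / (1 + 2 * c * w)" unfolding sc using d by (simp add: field_simps)
  have "(\<Sum>i\<in>I. (s * a i)\<^sup>2 / (1 - 2 * (s * a i))) \<le> (\<Sum>i\<in>I. (s * a i)\<^sup>2 / (1 - 2 * s * c))"
  proof (rule sum_mono)
    fix i assume i: "i \<in> I"
    have "s * a i \<le> s * c" using a[OF i] s by (intro mult_left_mono) auto
    then have "1 - 2 * s * c \<le> 1 - 2 * (s * a i)" by simp
    moreover have "0 < 1 - 2 * s * c" using sc1 by simp
    ultimately show "(s * a i)\<^sup>2 / (1 - 2 * (s * a i)) \<le> (s * a i)\<^sup>2 / (1 - 2 * s * c)"
      by (intro divide_left_mono) auto
  qed
  also have "\<dots> = s\<^sup>2 * A2 / (1 - 2 * s * c)"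
    by (simp add: A2(1) power_mult_distrib sum_distrib_left sum_divide_distrib)
  also have "\<dots> = x / (1 + 2 * c * w)"
  proof -
    have "s\<^sup>2 * A2 = (A2 * w\<^sup>2) / (1 + 2 * c * w)\<^sup>2" by (simp add: s_def power_divide)
    also have "\<dots> = x / (1 + 2 * c * w)\<^sup>2" using wA by simp
    finally have "s\<^sup>2 * A2 = x / (1 + 2 * c * w)\<^sup>2" .
    then show ?thesis unfolding one using d by (simp add: power2_eq_square)
  qed
  finally have 1: "(\<Sum>i\<in>I. (s * a i)\<^sup>2 / (1 - 2 * (s * a i))) \<le> x / (1 + 2 * c * w)" .
  have "s * (2 * A2 * w + 2 * c * x) \<le> s * u"
    using u sq s by (intro mult_left_mono) auto
  moreover have "s * (2 * A2 * w + 2 * c * x) = (2 * x + 2 * c * w * x) / (1 + 2 * c * w)"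
    using wA by (simp add: s_def field_simps power2_eq_square)
  ultimately have 2: "- s * u \<le> - ((2 * x + 2 * c * w * x) / (1 + 2 * c * w))" by simp
  have "- ((2 * x + 2 * c * w * x) / (1 + 2 * c * w)) + x / (1 + 2 * c * w)
      = (x - (2 * x + 2 * c * w * x)) / (1 + 2 * c * w)" by (simp only: diff_divide_distrib)
  also have "x - (2 * x + 2 * c * w * x) = (- x) * (1 + 2 * c * w)" by (simp add: algebra_simps)
  also have "(- x) * (1 + 2 * c * w) / (1 + 2 * c * w) = - x" using d by simp
  finally have "- ((2 * x + 2 * c * w * x) / (1 + 2 * c * w)) + x / (1 + 2 * c * w) = - x" .
  then show "- s * u + (\<Sum>i\<in>I. (s * a i)\<^sup>2 / (1 - 2 * (s * a i))) \<le> - x"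
    using 1 2 by linarith
qed

context prob_space
begin

lemma tail_upper:
  fixes G :: "nat \<Rightarrow> 'a \<Rightarrow> real" and a :: "nat \<Rightarrow> real"
  assumes I: "finite I" and ind: "indep_vars (\<lambda>_. borel) G I"
    and dist: "\<And>i. i \<in> I \<Longrightarrow> distributed M lborel (G i) std_normal_density"
    and a: "\<And>i. i \<in> I \<Longrightarrow> 0 \<le> a i \<and> a i \<le> c" and c: "c > 0"
    and A2: "A2 = (\<Sum>i\<in>I. (a i)\<^sup>2)" "A2 > 0"
    and sg: "sg = (\<Sum>i\<in>I. a i)" and t: "t > 0"
    and x: "x > 0" "x \<le> t\<^sup>2 * sg\<^sup>2 / (16 * A2)" "x \<le> t * sg / (4 * c)"
  shows "emeasure M {\<omega> \<in> space M. (1 + t) * sg \<le> (\<Sum>i\<in>I. a i * (G i \<omega>)\<^sup>2)} \<le> ennreal (exp (- x))"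
proof -
  have rv: "\<And>i. i \<in> I \<Longrightarrow> G i \<in> borel_measurable M"
    using ind by (auto simp: indep_vars_def)
  have sg0: "sg \<ge> 0" using a by (simp add: sg sum_nonneg)
  define u where "u = t * sg"
  have ub: "2 * sqrt (A2 * x) + 2 * c * x \<le> u"
  proof -
    have "A2 * x \<le> A2 * (t\<^sup>2 * sg\<^sup>2 / (16 * A2))" using x(2) A2(2) by (intro mult_left_mono) auto
    also have "\<dots> = (t * sg / 4)\<^sup>2" using A2(2) by (simp add: power2_eq_square field_simps)
    finally have "A2 * x \<le> (t * sg / 4)\<^sup>2" .
    then have "sqrt (A2 * x) \<le> sqrt ((t * sg / 4)\<^sup>2)" by (rule real_sqrt_le_mono)
    then have "sqrt (A2 * x) \<le> t * sg / 4" using t sg0 by simp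
    moreover have "c * x \<le> c * (t * sg / (4 * c))" using x(3) c by (intro mult_left_mono) auto
    then have "c * x \<le> t * sg / 4" using c by simp
    ultimately show ?thesis by (simp add: u_def)
  qed
  define w where "w = sqrt (x / A2)"
  define s where "s = w / (1 + 2 * c * w)"
  have s: "s > 0" "2 * s * c < 1"
    and bnd: "- s * u + (\<Sum>i\<in>I. (s * a i)\<^sup>2 / (1 - 2 * (s * a i))) \<le> - x"
    using opt_upper[OF I A2 c a x(1) ub] by (simp_all add: s_def w_def)
  define \<theta> where "\<theta> i = s * a i" for i
  have th: "0 \<le> \<theta> i \<and> \<theta> i < 1/2" if "i \<in> I" for i
  proof -
    have "s * a i \<le> s * c" using a[OF that] s by (intro mult_left_mono) auto
    then have "2 * (s * a i) < 1" using s(2) by (simp add: mult.assoc)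
    moreover have "0 \<le> s * a i" using s a[OF that] by simp
    ultimately show ?thesis by (simp add: \<theta>_def)
  qed
  have "{\<omega> \<in> space M. (1 + t) * sg \<le> (\<Sum>i\<in>I. a i * (G i \<omega>)\<^sup>2)}
      \<subseteq> {\<omega> \<in> space M. s * u \<le> (\<Sum>i\<in>I. \<theta> i * ((G i \<omega>)\<^sup>2 - 1))}"
  proof safe
    fix \<omega> assume "\<omega> \<in> space M" and h: "(1 + t) * sg \<le> (\<Sum>i\<in>I. a i * (G i \<omega>)\<^sup>2)"
    have "(\<Sum>i\<in>I. \<theta> i * ((G i \<omega>)\<^sup>2 - 1)) = s * ((\<Sum>i\<in>I. a i * (G i \<omega>)\<^sup>2) - sg)"
      by (simp add: \<theta>_def sg algebra_simps sum_subtractf sum_distrib_left)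
    moreover have "s * u \<le> s * ((\<Sum>i\<in>I. a i * (G i \<omega>)\<^sup>2) - sg)"
      using h s by (intro mult_left_mono) (auto simp: u_def algebra_simps)
    ultimately show "s * u \<le> (\<Sum>i\<in>I. \<theta> i * ((G i \<omega>)\<^sup>2 - 1))" by simp
  qed
  then have "emeasure M {\<omega> \<in> space M. (1 + t) * sg \<le> (\<Sum>i\<in>I. a i * (G i \<omega>)\<^sup>2)}
      \<le> emeasure M {\<omega> \<in> space M. s * u \<le> (\<Sum>i\<in>I. \<theta> i * ((G i \<omega>)\<^sup>2 - 1))}"
  proof (rule emeasure_mono)
    have [measurable]: "\<And>i. i \<in> I \<Longrightarrow> G i \<in> borel_measurable M" by (rule rv)
    show "{\<omega> \<in> space M. s * u \<le> (\<Sum>i\<in>I. \<theta> i * ((G i \<omega>)\<^sup>2 - 1))} \<in> sets M" by measurable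
  qed
  also have "\<dots> \<le> ennreal (exp (- (s * u)) * (\<Prod>i\<in>I. exp (- \<theta> i) / sqrt (1 - 2 * \<theta> i)))"
    by (rule chernoff[OF I ind dist]) (use th in auto)
  also have "\<dots> \<le> ennreal (exp (- (s * u)) * (\<Prod>i\<in>I. exp ((\<theta> i)\<^sup>2 / (1 - 2 * \<theta> i))))"
  proof (intro ennreal_leI mult_left_mono prod_mono)
    fix i assume "i \<in> I"
    then have "0 \<le> \<theta> i" "\<theta> i < 1/2" using th by auto
    then show "0 \<le> exp (- \<theta> i) / sqrt (1 - 2 * \<theta> i) \<and>
        exp (- \<theta> i) / sqrt (1 - 2 * \<theta> i) \<le> exp ((\<theta> i)\<^sup>2 / (1 - 2 * \<theta> i))"
      using mgf_bound_pos by simp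
  qed simp
  also have "exp (- (s * u)) * (\<Prod>i\<in>I. exp ((\<theta> i)\<^sup>2 / (1 - 2 * \<theta> i)))
      = exp (- s * u + (\<Sum>i\<in>I. (s * a i)\<^sup>2 / (1 - 2 * (s * a i))))"
  proof -
    have "(\<Prod>i\<in>I. exp ((\<theta> i)\<^sup>2 / (1 - 2 * \<theta> i))) = exp (\<Sum>i\<in>I. (s * a i)\<^sup>2 / (1 - 2 * (s * a i)))"
      using I by (simp add: exp_sum \<theta>_def)
    then show ?thesis by (simp add: mult_exp_exp)
  qed
  also have "ennreal \<dots> \<le> ennreal (exp (- x))" using bnd by (intro ennreal_leI) simp
  finally show ?thesis .
qed

lemma tail_lower:
  fixes G :: "nat \<Rightarrow> 'a \<Rightarrow> real" and a :: "nat \<Rightarrow> real"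
  assumes I: "finite I" and ind: "indep_vars (\<lambda>_. borel) G I"
    and dist: "\<And>i. i \<in> I \<Longrightarrow> distributed M lborel (G i) std_normal_density"
    and a: "\<And>i. i \<in> I \<Longrightarrow> 0 \<le> a i"
    and A2: "A2 = (\<Sum>i\<in>I. (a i)\<^sup>2)" "A2 > 0"
    and sg: "sg = (\<Sum>i\<in>I. a i)" and t: "t > 0"
    and x: "x \<le> t\<^sup>2 * sg\<^sup>2 / (16 * A2)"
  shows "emeasure M {\<omega> \<in> space M. (\<Sum>i\<in>I. a i * (G i \<omega>)\<^sup>2) \<le> (1 - t/2) * sg} \<le> ennreal (exp (- x))"
proof -
  have rv: "\<And>i. i \<in> I \<Longrightarrow> G i \<in> borel_measurable M"
    using ind by (auto simp: indep_vars_def)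
  have sg0: "sg \<ge> 0" using a by (simp add: sg sum_nonneg)
  define u where "u = t * sg / 2"
  define s where "s = u / (2 * A2)"
  have s0: "s \<ge> 0" using t sg0 A2 by (simp add: s_def u_def)
  define \<theta> where "\<theta> i = - s * a i" for i
  have th: "\<theta> i \<le> 0" if "i \<in> I" for i using a[OF that] s0 by (simp add: \<theta>_def)
  have "{\<omega> \<in> space M. (\<Sum>i\<in>I. a i * (G i \<omega>)\<^sup>2) \<le> (1 - t/2) * sg}
      \<subseteq> {\<omega> \<in> space M. s * u \<le> (\<Sum>i\<in>I. \<theta> i * ((G i \<omega>)\<^sup>2 - 1))}"
  proof safe
    fix \<omega> assume "\<omega> \<in> space M" and h: "(\<Sum>i\<in>I. a i * (G i \<omega>)\<^sup>2) \<le> (1 - t/2) * sg"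
    have "(\<Sum>i\<in>I. \<theta> i * ((G i \<omega>)\<^sup>2 - 1)) = s * (sg - (\<Sum>i\<in>I. a i * (G i \<omega>)\<^sup>2))"
      by (simp add: \<theta>_def sg algebra_simps sum_subtractf sum_distrib_left)
    moreover have "s * u \<le> s * (sg - (\<Sum>i\<in>I. a i * (G i \<omega>)\<^sup>2))"
      using h s0 by (intro mult_left_mono) (auto simp: u_def algebra_simps)
    ultimately show "s * u \<le> (\<Sum>i\<in>I. \<theta> i * ((G i \<omega>)\<^sup>2 - 1))" by simp
  qed
  then have "emeasure M {\<omega> \<in> space M. (\<Sum>i\<in>I. a i * (G i \<omega>)\<^sup>2) \<le> (1 - t/2) * sg}
      \<le> emeasure M {\<omega> \<in> space M. s * u \<le> (\<Sum>i\<in>I. \<theta> i * ((G i \<omega>)\<^sup>2 - 1))}"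
  proof (rule emeasure_mono)
    have [measurable]: "\<And>i. i \<in> I \<Longrightarrow> G i \<in> borel_measurable M" by (rule rv)
    show "{\<omega> \<in> space M. s * u \<le> (\<Sum>i\<in>I. \<theta> i * ((G i \<omega>)\<^sup>2 - 1))} \<in> sets M" by measurable
  qed
  also have "\<dots> \<le> ennreal (exp (- (s * u)) * (\<Prod>i\<in>I. exp (- \<theta> i) / sqrt (1 - 2 * \<theta> i)))"
  proof (rule chernoff[OF I ind dist])
    fix i assume "i \<in> I" then show "\<theta> i < 1/2" using th[of i] by simp
  qed
  also have "\<dots> \<le> ennreal (exp (- (s * u)) * (\<Prod>i\<in>I. exp ((\<theta> i)\<^sup>2)))"
  proof (intro ennreal_leI mult_left_mono prod_mono)
    fix i assume "i \<in> I"
    then have "\<theta> i \<le> 0" using th by auto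
    moreover then have "1 - 2 * \<theta> i > 0" by simp
    ultimately show "0 \<le> exp (- \<theta> i) / sqrt (1 - 2 * \<theta> i) \<and>
        exp (- \<theta> i) / sqrt (1 - 2 * \<theta> i) \<le> exp ((\<theta> i)\<^sup>2)"
      using mgf_bound_neg by simp
  qed simp
  also have "exp (- (s * u)) * (\<Prod>i\<in>I. exp ((\<theta> i)\<^sup>2)) = exp (- (s * u) + s\<^sup>2 * A2)"
  proof -
    have "(\<Prod>i\<in>I. exp ((\<theta> i)\<^sup>2)) = exp (\<Sum>i\<in>I. (\<theta> i)\<^sup>2)" using I by (simp add: exp_sum)
    also have "(\<Sum>i\<in>I. (\<theta> i)\<^sup>2) = s\<^sup>2 * A2"
      by (simp add: \<theta>_def A2(1) power_mult_distrib sum_distrib_left)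
    finally show ?thesis by (simp add: mult_exp_exp)
  qed
  also have "- (s * u) + s\<^sup>2 * A2 = - (t\<^sup>2 * sg\<^sup>2 / (16 * A2))"
    using A2(2) by (simp add: s_def u_def power2_eq_square field_simps)
  also have "ennreal (exp (- (t\<^sup>2 * sg\<^sup>2 / (16 * A2)))) \<le> ennreal (exp (- x))"
    using x by (intro ennreal_leI) simp
  finally show ?thesis .
qed

end


definition KB :: "nat \<Rightarrow> nat \<Rightarrow> (nat \<Rightarrow> nat \<Rightarrow> real) \<Rightarrow> real" where
  "KB N n A = (\<Sum>i<N. \<Sum>j<n. (A i j)\<^sup>2)"

lemma KB_nonneg: "0 \<le> KB N n A"
  by (simp add: KB_def sum_nonneg)

lemma qf_le_KB: "qf N n A w \<le> KB N n A * nsq n w"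
proof -
  have "(Lv n A i w)\<^sup>2 \<le> (\<Sum>j<n. (A i j)\<^sup>2) * nsq n w" for i
  proof -
    have "\<bar>Lv n A i w\<bar> \<le> (\<Sum>j<n. \<bar>A i j\<bar> * \<bar>w j\<bar>)"
      unfolding Lv_def by (rule order_trans[OF sum_abs]) (simp add: abs_mult)
    also have "\<dots> \<le> L2_set (A i) {..<n} * L2_set w {..<n}" by (rule L2_set_mult_ineq)
    finally have "\<bar>Lv n A i w\<bar>\<^sup>2 \<le> (L2_set (A i) {..<n} * L2_set w {..<n})\<^sup>2"
      by (intro power_mono) auto
    also have "\<dots> = (\<Sum>j<n. (A i j)\<^sup>2) * nsq n w"
      by (simp add: L2_set_def power_mult_distrib nsq_def sum_nonneg)
    finally show ?thesis by simp
  qed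
  then have "qf N n A w \<le> (\<Sum>i<N. (\<Sum>j<n. (A i j)\<^sup>2) * nsq n w)"
    unfolding qf_def by (intro sum_mono) auto
  also have "\<dots> = KB N n A * nsq n w" by (simp add: KB_def sum_distrib_right)
  finally show ?thesis .
qed

lemma sqrt_qf_tri: "sqrt (qf N n A (\<lambda>j. a j + b j)) \<le> sqrt (qf N n A a) + sqrt (qf N n A b)"
proof -
  have "\<And>i. Lv n A i (\<lambda>j. a j + b j) = Lv n A i a + Lv n A i b"
    using Lv_lin[of n A _ 1 a 1 b] by simp
  then show ?thesis
    using L2_set_triangle_ineq[of "\<lambda>i. Lv n A i a" "\<lambda>i. Lv n A i b" "{..<N}"]
    by (simp add: L2_set_def qf_def)
qed

lemma mvn_close:
  "mat_vec_norm N n A x \<le> mat_vec_norm N n A z + sqrt (KB N n A * nsq n (\<lambda>j. x j - z j))"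
proof -
  have "sqrt (qf N n A x) = sqrt (qf N n A (\<lambda>j. z j + (x j - z j)))" by simp
  also have "\<dots> \<le> sqrt (qf N n A z) + sqrt (qf N n A (\<lambda>j. x j - z j))" by (rule sqrt_qf_tri)
  also have "sqrt (qf N n A (\<lambda>j. x j - z j)) \<le> sqrt (KB N n A * nsq n (\<lambda>j. x j - z j))"
    by (intro real_sqrt_le_mono qf_le_KB)
  finally show ?thesis by (simp add: mvn_qf)
qed

definition netk :: "nat \<Rightarrow> nat \<Rightarrow> (nat \<Rightarrow> real) set" where
  "netk n k = (SOME F. finite F \<and> F \<subseteq> unit_vecs n \<and> real (card F) \<le> (1 + 2 / (1 / real (Suc k)))^n \<and>
      (\<forall>x\<in>unit_vecs n. \<exists>y\<in>F. nsq n (\<lambda>j. y j - x j) \<le> (1 / real (Suc k))\<^sup>2))"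

lemma netk: "finite (netk n k) \<and> netk n k \<subseteq> unit_vecs n \<and>
      (\<forall>x\<in>unit_vecs n. \<exists>y\<in>netk n k. nsq n (\<lambda>j. y j - x j) \<le> (1 / real (Suc k))\<^sup>2)"
proof -
  have "\<exists>F. finite F \<and> F \<subseteq> unit_vecs n \<and> real (card F) \<le> (1 + 2 / (1 / real (Suc k)))^n \<and>
      (\<forall>x\<in>unit_vecs n. \<exists>y\<in>F. nsq n (\<lambda>j. y j - x j) \<le> (1 / real (Suc k))\<^sup>2)"
    by (rule net_exists) simp
  from someI_ex[OF this] show ?thesis unfolding netk_def by blast
qed

definition Dn :: "nat \<Rightarrow> (nat \<Rightarrow> real) set" where
  "Dn n = (\<Union>k. netk n k)"

lemma Dn_countable: "countable (Dn n)"
  unfolding Dn_def using netk by (intro countable_UN) (auto intro: countable_finite)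

lemma Dn_sub: "Dn n \<subseteq> unit_vecs n"
  unfolding Dn_def using netk by blast

lemma Dn_ne: "1 \<le> n \<Longrightarrow> Dn n \<noteq> {}"
  using netk[of n 0] unit_vecs_ne[of n] unfolding Dn_def by blast

lemma Dn_dense:
  assumes x: "x \<in> unit_vecs n" and e: "e > 0"
  shows "\<exists>z\<in>Dn n. nsq n (\<lambda>j. z j - x j) < e"
proof -
  obtain k :: nat where k: "1 / e < real k" using reals_Archimedean2 by blast
  have "(1 / real (Suc k))\<^sup>2 \<le> 1 / real (Suc k)"
    by (simp add: power2_eq_square divide_le_eq)
  also have "1 / real (Suc k) < e"
    using k e by (simp add: divide_less_eq field_simps)
  finally have lt: "(1 / real (Suc k))\<^sup>2 < e" .
  obtain z where "z \<in> netk n k" "nsq n (\<lambda>j. z j - x j) \<le> (1 / real (Suc k))\<^sup>2"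
    using netk[of n k] x by blast
  then show ?thesis using lt unfolding Dn_def by force
qed

lemma smin_ge_iff:
  assumes n1: "1 \<le> n"
  shows "c \<le> s_min N n A \<longleftrightarrow> (\<forall>z\<in>Dn n. c \<le> mat_vec_norm N n A z)"
proof
  assume "c \<le> s_min N n A"
  then show "\<forall>z\<in>Dn n. c \<le> mat_vec_norm N n A z"
    using smin_le Dn_sub order_trans by blast
next
  assume h: "\<forall>z\<in>Dn n. c \<le> mat_vec_norm N n A z"
  have "c \<le> mat_vec_norm N n A x" if x: "x \<in> unit_vecs n" for x
  proof (rule field_le_epsilon)
    fix \<delta> :: real assume d: "0 < \<delta>"
    define e where "e = \<delta>\<^sup>2 / (KB N n A + 1)"
    have e: "e > 0" using d KB_nonneg[of N n A] by (simp add: e_def)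
    obtain z where z: "z \<in> Dn n" "nsq n (\<lambda>j. z j - x j) < e" using Dn_dense[OF x e] by blast
    have "KB N n A * nsq n (\<lambda>j. z j - x j) \<le> KB N n A * e"
      using z(2) KB_nonneg[of N n A] by (intro mult_left_mono) auto
    also have "\<dots> \<le> \<delta>\<^sup>2"
      using KB_nonneg[of N n A] d by (simp add: e_def field_simps)
    finally have "sqrt (KB N n A * nsq n (\<lambda>j. z j - x j)) \<le> \<delta>"
      using d by (metis abs_of_pos real_sqrt_abs real_sqrt_le_mono order_trans)
    moreover have "mat_vec_norm N n A z \<le> mat_vec_norm N n A x + sqrt (KB N n A * nsq n (\<lambda>j. z j - x j))"
      by (rule mvn_close)
    moreover have "c \<le> mat_vec_norm N n A z" using h z(1) by blast
    ultimately show "c \<le> mat_vec_norm N n A x + \<delta>" by simp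
  qed
  then show "c \<le> s_min N n A"
    unfolding s_min_def using unit_vecs_ne[OF n1] by (intro cINF_greatest) auto
qed

lemma smax_le_iff:
  assumes n1: "1 \<le> n"
  shows "s_max N n A \<le> c \<longleftrightarrow> (\<forall>z\<in>Dn n. mat_vec_norm N n A z \<le> c)"
proof
  assume "s_max N n A \<le> c"
  then show "\<forall>z\<in>Dn n. mat_vec_norm N n A z \<le> c"
    using smax_ge Dn_sub order_trans by blast
next
  assume h: "\<forall>z\<in>Dn n. mat_vec_norm N n A z \<le> c"
  have "mat_vec_norm N n A x \<le> c" if x: "x \<in> unit_vecs n" for x
  proof (rule field_le_epsilon)
    fix \<delta> :: real assume d: "0 < \<delta>"
    define e where "e = \<delta>\<^sup>2 / (KB N n A + 1)"
    have e: "e > 0" using d KB_nonneg[of N n A] by (simp add: e_def)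
    obtain z where z: "z \<in> Dn n" "nsq n (\<lambda>j. z j - x j) < e" using Dn_dense[OF x e] by blast
    have "KB N n A * nsq n (\<lambda>j. x j - z j) \<le> KB N n A * e"
      using z(2) KB_nonneg[of N n A] nsq_sym[of n x z] by (intro mult_left_mono) auto
    also have "\<dots> \<le> \<delta>\<^sup>2"
      using KB_nonneg[of N n A] d by (simp add: e_def field_simps)
    finally have "sqrt (KB N n A * nsq n (\<lambda>j. x j - z j)) \<le> \<delta>"
      using d by (metis abs_of_pos real_sqrt_abs real_sqrt_le_mono order_trans)
    moreover have "mat_vec_norm N n A x \<le> mat_vec_norm N n A z + sqrt (KB N n A * nsq n (\<lambda>j. x j - z j))"
      by (rule mvn_close)
    moreover have "mat_vec_norm N n A z \<le> c" using h z(1) by blast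
    ultimately show "mat_vec_norm N n A x \<le> c + \<delta>" by simp
  qed
  then show "s_max N n A \<le> c"
    unfolding s_max_def using unit_vecs_ne[OF n1] by (intro cSUP_least) auto
qed


lemma qf_rows:
  "qf N n (\<lambda>i j. lam i * S i j) y = (\<Sum>i<N. (lam i)\<^sup>2 * (\<Sum>j<n. S i j * y j)\<^sup>2)"
proof -
  have "\<And>i. Lv n (\<lambda>i j. lam i * S i j) i y = lam i * (\<Sum>j<n. S i j * y j)"
    by (simp add: Lv_def sum_distrib_left mult.assoc)
  then show ?thesis by (simp add: qf_def power_mult_distrib)
qed

lemma mvn_meas:
  fixes S :: "'a \<Rightarrow> nat \<Rightarrow> nat \<Rightarrow> real"
  assumes Sm: "\<And>i j. i < N \<Longrightarrow> j < n \<Longrightarrow> (\<lambda>\<omega>. S \<omega> i j) \<in> borel_measurable M"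
  shows "(\<lambda>\<omega>. mat_vec_norm N n (\<lambda>i j. lam i * S \<omega> i j) z) \<in> borel_measurable M"
proof -
  have "(\<lambda>\<omega>. \<Sum>i<N. (\<Sum>j<n. lam i * S \<omega> i j * z j)\<^sup>2) \<in> borel_measurable M"
  proof (rule borel_measurable_sum)
    fix i assume i: "i \<in> {..<N}"
    have "(\<lambda>\<omega>. \<Sum>j<n. lam i * S \<omega> i j * z j) \<in> borel_measurable M"
    proof (rule borel_measurable_sum)
      fix j assume j: "j \<in> {..<n}"
      have [measurable]: "(\<lambda>\<omega>. S \<omega> i j) \<in> borel_measurable M" using i j Sm by auto
      show "(\<lambda>\<omega>. lam i * S \<omega> i j * z j) \<in> borel_measurable M" by measurable
    qed
    then show "(\<lambda>\<omega>. (\<Sum>j<n. lam i * S \<omega> i j * z j)\<^sup>2) \<in> borel_measurable M" by measurable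
  qed
  then show ?thesis unfolding mat_vec_norm_def by measurable
qed

lemma G_meas:
  fixes S :: "'a \<Rightarrow> nat \<Rightarrow> nat \<Rightarrow> real"
  assumes Sm: "\<And>i j. i < N \<Longrightarrow> j < n \<Longrightarrow> (\<lambda>\<omega>. S \<omega> i j) \<in> borel_measurable M"
  shows "(\<lambda>\<omega>. \<Sum>i<N. (lam i)\<^sup>2 * (\<Sum>j<n. S \<omega> i j * y j)\<^sup>2) \<in> borel_measurable M"
proof (rule borel_measurable_sum)
  fix i assume i: "i \<in> {..<N}"
  have "(\<lambda>\<omega>. \<Sum>j<n. S \<omega> i j * y j) \<in> borel_measurable M"
  proof (rule borel_measurable_sum)
    fix j assume j: "j \<in> {..<n}"
    have [measurable]: "(\<lambda>\<omega>. S \<omega> i j) \<in> borel_measurable M" using i j Sm by auto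
    show "(\<lambda>\<omega>. S \<omega> i j * y j) \<in> borel_measurable M" by measurable
  qed
  then show "(\<lambda>\<omega>. (lam i)\<^sup>2 * (\<Sum>j<n. S \<omega> i j * y j)\<^sup>2) \<in> borel_measurable M" by measurable
qed

theorem lemma7:
  fixes M :: "'a measure" and S :: "'a \<Rightarrow> nat \<Rightarrow> nat \<Rightarrow> real"
    and lam :: "nat \<Rightarrow> real" and N n :: nat and t :: real
  assumes "prob_space M"
    and "1 \<le> n" and "n \<le> N"
    and "\<And>i. i < N \<Longrightarrow> lam i \<ge> 0"
    and "l2_norm N lam > 0"
    and "prob_space.indep_vars M (\<lambda>_. borel) (\<lambda>p \<omega>. S \<omega> (fst p) (snd p)) ({..<N} \<times> {..<n})"
    and "\<And>i j. i < N \<Longrightarrow> j < n \<Longrightarrow> distributed M lborel (\<lambda>\<omega>. S \<omega> i j) std_normal_density"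
    and "t < 1"
  shows "measure M {\<omega> \<in> space M.
            (1 - t) * sqrt (\<Sum>i<N. (lam i)\<^sup>2) \<le> s_min N n (\<lambda>i j. lam i * S \<omega> i j)
          \<and> s_min N n (\<lambda>i j. lam i * S \<omega> i j) \<le> s_max N n (\<lambda>i j. lam i * S \<omega> i j)
          \<and> s_max N n (\<lambda>i j. lam i * S \<omega> i j) \<le> (1 + t) * sqrt (\<Sum>i<N. (lam i)\<^sup>2)}
       \<ge> 1 - 9 ^ n * 2 * exp (- min ((1/16) * (l2_norm N lam ^ 4 / l4_norm N lam ^ 4) * t\<^sup>2)
                                    ((1/4) * (l2_norm N lam ^ 2 / linf_norm N lam ^ 2) * t))"
  (is "measure M ?Gd \<ge> 1 - 9 ^ n * 2 * exp (- ?xs)")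
proof -
  interpret P: prob_space M by (rule assms(1))
  note n1 = assms(2) and nN = assms(3) and lam0 = assms(4) and l2pos = assms(5)
  note ind = assms(6) and dist = assms(7) and t1 = assms(8)
  have Sm: "\<And>i j. i < N \<Longrightarrow> j < n \<Longrightarrow> (\<lambda>\<omega>. S \<omega> i j) \<in> borel_measurable M"
  proof -
    fix i j assume "i < N" "j < n"
    from distributed_measurable[OF dist[OF this]] show "(\<lambda>\<omega>. S \<omega> i j) \<in> borel_measurable M" by simp
  qed
  have meas0: "0 \<le> measure M ?Gd" by simp
  show ?thesis
  proof (cases "t \<le> 0")
    case True
    have "?xs \<le> (1/4) * (l2_norm N lam ^ 2 / linf_norm N lam ^ 2) * t" by simp
    also have "\<dots> \<le> 0" using True by (intro mult_nonneg_nonpos) auto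
    finally have "exp (- ?xs) \<ge> 1" by simp
    moreover have "(9::real) ^ n \<ge> 1" by simp
    ultimately have "9 ^ n * exp (- ?xs) \<ge> 1 * 1"
      by (intro mult_mono) auto
    then have "9 ^ n * 2 * exp (- ?xs) \<ge> 2" by (simp add: mult.commute mult.left_commute)
    then show ?thesis using meas0 by linarith
  next
    case False
    then have t0: "t > 0" by simp
    define \<sigma>2 where "\<sigma>2 = (\<Sum>i<N. (lam i)\<^sup>2)"
    define A2 where "A2 = (\<Sum>i<N. ((lam i)\<^sup>2)\<^sup>2)"
    define c where "c = (linf_norm N lam)\<^sup>2"
    have l2: "l2_norm N lam = sqrt \<sigma>2" by (simp add: l2_norm_def \<sigma>2_def)
    have s2pos: "\<sigma>2 > 0" using l2pos l2 by simp
    have s2nn: "\<sigma>2 \<ge> 0" using s2pos by simp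
    have l2_4: "l2_norm N lam ^ 4 = \<sigma>2\<^sup>2"
    proof -
      have "l2_norm N lam ^ 4 = ((sqrt \<sigma>2)\<^sup>2)\<^sup>2" by (simp add: l2 flip: power_mult)
      then show ?thesis using s2nn by simp
    qed
    have l2_2: "l2_norm N lam ^ 2 = \<sigma>2" using s2nn by (simp add: l2)
    have l4_4: "l4_norm N lam ^ 4 = A2"
    proof -
      have "(\<Sum>i<N. (lam i)^4) = A2" by (simp add: A2_def flip: power_mult)
      moreover have "0 \<le> (\<Sum>i<N. (lam i)^4)" by (intro sum_nonneg) (simp add: zero_le_even_power)
      ultimately show ?thesis by (simp add: l4_norm_def)
    qed
    obtain i0 where i0: "i0 < N" "lam i0 \<noteq> 0"
    proof (rule ccontr)
      assume "\<not> thesis"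
      then have "\<forall>i<N. lam i = 0" using that by blast
      then have "\<sigma>2 = 0" by (simp add: \<sigma>2_def)
      then show False using s2pos by simp
    qed
    have A2pos: "A2 > 0"
    proof -
      have "((lam i0)\<^sup>2)\<^sup>2 \<le> A2" unfolding A2_def using i0 by (intro member_le_sum) auto
      moreover have "((lam i0)\<^sup>2)\<^sup>2 > 0" using i0 by simp
      ultimately show ?thesis by linarith
    qed
    have Nne: "{..<N} \<noteq> {}" using i0 by auto
    have labs: "\<bar>lam i\<bar> \<le> linf_norm N lam" if "i < N" for i
      unfolding linf_norm_def using that by (intro Max_ge) auto
    have ac: "0 \<le> (lam i)\<^sup>2 \<and> (lam i)\<^sup>2 \<le> c" if "i \<in> {..<N}" for i
    proof -
      have "\<bar>lam i\<bar>\<^sup>2 \<le> (linf_norm N lam)\<^sup>2" using labs[of i] that by (intro power_mono) auto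
      then show ?thesis by (simp add: c_def)
    qed
    have cpos: "c > 0"
    proof -
      have "(lam i0)\<^sup>2 \<le> c" using ac[of i0] i0 by auto
      moreover have "(lam i0)\<^sup>2 > 0" using i0 by simp
      ultimately show ?thesis by linarith
    qed
    have xs_eq: "?xs = min (t\<^sup>2 * \<sigma>2\<^sup>2 / (16 * A2)) (t * \<sigma>2 / (4 * c))"
      by (simp add: l2_4 l4_4 l2_2 c_def mult.commute)
    have xpos: "?xs > 0" unfolding xs_eq using t0 s2pos A2pos cpos by simp
    have x1: "?xs \<le> t\<^sup>2 * \<sigma>2\<^sup>2 / (16 * A2)" and x2: "?xs \<le> t * \<sigma>2 / (4 * c)"
      unfolding xs_eq by auto
    obtain F where F: "finite F" "F \<subseteq> unit_vecs n" "real (card F) \<le> (1 + 2 / (1/4))^n"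
      and cov: "\<forall>x\<in>unit_vecs n. \<exists>y\<in>F. nsq n (\<lambda>j. y j - x j) \<le> (1/4)\<^sup>2"
      using net_exists[of "1/4" n] by auto
    have cardF: "real (card F) \<le> 9 ^ n" using F(3) by simp
    define Q where "Q y \<omega> = (\<Sum>i<N. (lam i)\<^sup>2 * (\<Sum>j<n. S \<omega> i j * y j)\<^sup>2)" for y \<omega>
    define Bad where "Bad y = {\<omega> \<in> space M. (1 + t) * \<sigma>2 \<le> Q y \<omega>} \<union> {\<omega> \<in> space M. Q y \<omega> \<le> (1 - t/2) * \<sigma>2}" for y
    have Qm: "Q y \<in> borel_measurable M" for y unfolding Q_def by (rule G_meas[OF Sm])
    have Bad_sets: "Bad y \<in> P.events" for y
    proof -
      have [measurable]: "Q y \<in> borel_measurable M" by (rule Qm)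
      show ?thesis unfolding Bad_def by measurable
    qed
    have Bad_le: "measure M (Bad y) \<le> 2 * exp (- ?xs)" if yF: "y \<in> F" for y
    proof -
      have yU: "y \<in> unit_vecs n" using yF F(2) by auto
      have indG: "P.indep_vars (\<lambda>_. borel) (\<lambda>i \<omega>. \<Sum>j<n. S \<omega> i j * y j) {..<N}"
        by (rule P.rows_indep[OF ind])
      have distG: "distributed M lborel (\<lambda>\<omega>. \<Sum>j<n. S \<omega> i j * y j) std_normal_density" if "i \<in> {..<N}" for i
        using that by (intro P.row_normal[OF ind dist _ yU]) auto
      have e1: "emeasure M {\<omega> \<in> space M. (1 + t) * \<sigma>2 \<le> Q y \<omega>} \<le> ennreal (exp (- ?xs))"
        unfolding Q_def
        by (rule P.tail_upper[OF _ indG distG ac cpos A2_def A2pos \<sigma>2_def t0 xpos x1 x2]) auto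
      have e2: "emeasure M {\<omega> \<in> space M. Q y \<omega> \<le> (1 - t/2) * \<sigma>2} \<le> ennreal (exp (- ?xs))"
        unfolding Q_def
        by (rule P.tail_lower[OF _ indG distG _ A2_def A2pos \<sigma>2_def t0 x1]) auto
      have m1: "measure M {\<omega> \<in> space M. (1 + t) * \<sigma>2 \<le> Q y \<omega>} \<le> exp (- ?xs)"
        using e1 by (simp add: P.emeasure_eq_measure)
      have m2: "measure M {\<omega> \<in> space M. Q y \<omega> \<le> (1 - t/2) * \<sigma>2} \<le> exp (- ?xs)"
        using e2 by (simp add: P.emeasure_eq_measure)
      have [measurable]: "Q y \<in> borel_measurable M" by (rule Qm)
      have "measure M (Bad y) \<le> measure M {\<omega> \<in> space M. (1 + t) * \<sigma>2 \<le> Q y \<omega>}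
          + measure M {\<omega> \<in> space M. Q y \<omega> \<le> (1 - t/2) * \<sigma>2}"
      proof -
        have s1: "{\<omega> \<in> space M. (1 + t) * \<sigma>2 \<le> Q y \<omega>} \<in> P.events" by measurable
        have s2: "{\<omega> \<in> space M. Q y \<omega> \<le> (1 - t/2) * \<sigma>2} \<in> P.events" by measurable
        show ?thesis unfolding Bad_def
          by (rule measure_subadditive[OF s1 s2]) (simp_all add: P.emeasure_eq_measure)
      qed
      then show ?thesis using m1 m2 by simp
    qed
    define fn where "fn = from_nat_into (Dn n)"
    have rng: "range fn = Dn n" unfolding fn_def using Dn_ne[OF n1] Dn_countable by simp
    have Gd_eq: "?Gd = {\<omega> \<in> space M. \<forall>k. (1 - t) * sqrt \<sigma>2 \<le> mat_vec_norm N n (\<lambda>i j. lam i * S \<omega> i j) (fn k)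
        \<and> mat_vec_norm N n (\<lambda>i j. lam i * S \<omega> i j) (fn k) \<le> (1 + t) * sqrt \<sigma>2}"
    proof -
      have "\<And>A. ((1 - t) * sqrt \<sigma>2 \<le> s_min N n A \<and> s_min N n A \<le> s_max N n A \<and> s_max N n A \<le> (1 + t) * sqrt \<sigma>2)
          \<longleftrightarrow> (\<forall>k. (1 - t) * sqrt \<sigma>2 \<le> mat_vec_norm N n A (fn k) \<and> mat_vec_norm N n A (fn k) \<le> (1 + t) * sqrt \<sigma>2)"
      proof -
        fix A
        have conv: "(\<forall>z\<in>Dn n. P z) \<longleftrightarrow> (\<forall>k. P (fn k))" for P unfolding rng[symmetric] by auto
        have e1: "(1 - t) * sqrt \<sigma>2 \<le> s_min N n A \<longleftrightarrow> (\<forall>k. (1 - t) * sqrt \<sigma>2 \<le> mat_vec_norm N n A (fn k))"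
          unfolding smin_ge_iff[OF n1] by (rule conv)
        have e2: "s_max N n A \<le> (1 + t) * sqrt \<sigma>2 \<longleftrightarrow> (\<forall>k. mat_vec_norm N n A (fn k) \<le> (1 + t) * sqrt \<sigma>2)"
          unfolding smax_le_iff[OF n1] by (rule conv)
        show "?thesis A" unfolding e1 e2 using smin_le_smax[OF n1, of N A] by (simp add: all_conj_distrib)
      qed
      then show ?thesis by (simp add: \<sigma>2_def)
    qed
    have Gd_sets: "?Gd \<in> P.events"
    proof -
      have [measurable]: "(\<lambda>\<omega>. mat_vec_norm N n (\<lambda>i j. lam i * S \<omega> i j) (fn k)) \<in> borel_measurable M" for k
        by (rule mvn_meas[OF Sm])
      show ?thesis unfolding Gd_eq by measurable
    qed
    have sub: "space M - (\<Union>y\<in>F. Bad y) \<subseteq> ?Gd"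
    proof
      fix \<omega> assume \<omega>: "\<omega> \<in> space M - (\<Union>y\<in>F. Bad y)"
      let ?A = "\<lambda>i j. lam i * S \<omega> i j"
      have good: "(1 - t/2) * \<sigma>2 \<le> qf N n ?A y \<and> qf N n ?A y \<le> (1 + t) * \<sigma>2" if "y \<in> F" for y
      proof -
        have "qf N n ?A y = Q y \<omega>" by (simp add: qf_rows Q_def)
        moreover have "\<omega> \<notin> Bad y" using \<omega> that by auto
        ultimately show ?thesis using \<omega> by (auto simp: Bad_def)
      qed
      have "(1 - t) * sqrt \<sigma>2 \<le> s_min N n ?A \<and> s_max N n ?A \<le> (1 + t) * sqrt \<sigma>2"
      proof (rule det_main[OF n1 t0 t1 s2pos F(2)])
        fix x assume "x \<in> unit_vecs n"
        then show "\<exists>y\<in>F. nsq n (\<lambda>j. y j - x j) \<le> 1/16" using cov by (auto simp: power2_eq_square)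
      qed (rule good)
      then show "\<omega> \<in> ?Gd" using \<omega> smin_le_smax[OF n1, of N ?A] by (simp add: \<sigma>2_def)
    qed
    have UB: "(\<Union>y\<in>F. Bad y) \<in> P.events" using F(1) Bad_sets by auto
    have "1 - 9 ^ n * 2 * exp (- ?xs) \<le> 1 - real (card F) * (2 * exp (- ?xs))"
      using cardF by (intro diff_left_mono) (simp add: mult_right_mono)
    also have "real (card F) * (2 * exp (- ?xs)) \<ge> (\<Sum>y\<in>F. measure M (Bad y))"
      using Bad_le sum_mono[of F "\<lambda>y. measure M (Bad y)" "\<lambda>_. 2 * exp (- ?xs)"] by simp
    then have "1 - real (card F) * (2 * exp (- ?xs)) \<le> 1 - (\<Sum>y\<in>F. measure M (Bad y))" by simp
    also have "(\<Sum>y\<in>F. measure M (Bad y)) \<ge> measure M (\<Union>y\<in>F. Bad y)"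
      using F(1) Bad_sets by (intro P.finite_measure_subadditive_finite) auto
    then have "1 - (\<Sum>y\<in>F. measure M (Bad y)) \<le> 1 - measure M (\<Union>y\<in>F. Bad y)" by simp
    also have "\<dots> = measure M (space M - (\<Union>y\<in>F. Bad y))" using P.prob_compl[OF UB] by simp
    also have "\<dots> \<le> measure M ?Gd" using sub Gd_sets by (rule P.finite_measure_mono)
    finally show ?thesis .
  qed
qed


end
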